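(* Let $D$ be an integral domain with quotient field $K$, $X,Y$ indeterminates, $\star$ a semistar operation on $D$, $D_1:=D[X]$, $K_1:=K(X)$. Let $\boldsymbol\Delta_1^\star:=\{Q_1\in\mathrm{Spec}(D_1)\mid Q_1\cap D=(0),\ \text{or } Q_1=(Q_1\cap D)[X]\text{ and }(Q_1\cap D)^{\star_f}\subsetneq D^\star\}$, $\mathcal S_1^\star:=D_1[Y]\setminus\bigcup\{Q_1[Y]\mid Q_1\in\boldsymbol\Delta_1^\star\}$, and define $[\star]:\overline{\boldsymbol F}(D_1)\to\overline{\boldsymbol F}(D_1)$ by $E^{[\star]}:=E[Y]_{\mathcal S_1^\star}\cap K_1$. Then: (a) $[\star]$ is a stable semistar operation of finite type on $D[X]$, i.e. $\widetilde{[\star]}=[\star]$; moreover, if $\star$ is a (semi)star operation on $D$ then $[\star]$ is a (semi)star operation on $D[X]$; (b) $[\widetilde\star]=[\star_f]=[\star]$.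
   Context: $\overline{\boldsymbol F}(A)$ is the set of nonzero $A$-submodules of the quotient field of a domain $A$. A semistar operation on $A$ is a map $\star:\overline{\boldsymbol F}(A)\to\overline{\boldsymbol F}(A)$ with $(xE)^\star=xE^\star$ for nonzero $x$ in the quotient field, $E\subseteq F\Rightarrow E^\star\subseteq F^\star$, $E\subseteq E^\star$, $(E^\star)^\star=E^\star$; a (semi)star operation if $A^\star=A$. $E^{\star_f}=\bigcup\{F^\star\mid F\subseteq E,\ F$ nonzero finitely generated fractional ideal$\}$; $\star$ is of finite type if $\star=\star_f$; stable if $(E\cap F)^\star=E^\star\cap F^\star$. A nonzero ideal $I$ is a quasi-$\star$-ideal if $I^\star\cap A=I$; $\mathrm{QMax}^\star(A)$ is the set of maximal elements among proper quasi-$\star$-ideals. $\widetilde\star$ is the semistar operation $E\mapsto\bigcap\{EA_P\mid P\in\mathrm{QMax}^{\star_f}(A)\}$. $E[Y]_{\mathcal S_1^\star}$ is the $D_1[Y]_{\mathcal S_1^\star}$-submodule of $K(X,Y)$ generated by $E$. *)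

theory Defs
  imports "HOL-Computational_Algebra.Polynomial" "HOL-Computational_Algebra.Fraction_Field"
begin

definition gen_mod :: "'a::comm_ring_1 set \<Rightarrow> 'a set \<Rightarrow> 'a set" where
  "gen_mod R S = \<Inter>{M. 0 \<in> M \<and> S \<subseteq> M \<and> (\<forall>x\<in>M. \<forall>y\<in>M. x + y \<in> M)
                        \<and> (\<forall>r\<in>R. \<forall>x\<in>M. r * x \<in> M)}"

definition is_submod :: "'a::comm_ring_1 set \<Rightarrow> 'a set \<Rightarrow> bool" where
  "is_submod R M \<longleftrightarrow> 0 \<in> M \<and> (\<forall>x\<in>M. \<forall>y\<in>M. x + y \<in> M) \<and> (\<forall>r\<in>R. \<forall>x\<in>M. r * x \<in> M)"

definition is_subring :: "'a::comm_ring_1 set \<Rightarrow> bool" where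
  "is_subring R \<longleftrightarrow> 0 \<in> R \<and> 1 \<in> R \<and> (\<forall>x\<in>R. \<forall>y\<in>R. x + y \<in> R \<and> x - y \<in> R \<and> x * y \<in> R)"

definition is_ideal :: "'a::comm_ring_1 set \<Rightarrow> 'a set \<Rightarrow> bool" where
  "is_ideal R I \<longleftrightarrow> I \<subseteq> R \<and> is_submod R I"

definition prime_ideal :: "'a::comm_ring_1 set \<Rightarrow> 'a set \<Rightarrow> bool" where
  "prime_ideal R P \<longleftrightarrow> is_ideal R P \<and> P \<noteq> R \<and> (\<forall>a\<in>R. \<forall>b\<in>R. a * b \<in> P \<longrightarrow> a \<in> P \<or> b \<in> P)"

section \<open>Semistar operations on a subring A of a field L (L = quotient field of A)\<close>

definition Fbar :: "'f::field set \<Rightarrow> 'f set set" where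
  "Fbar A = {E. is_submod A E \<and> E \<noteq> {0}}"

definition semistar :: "'f::field set \<Rightarrow> ('f set \<Rightarrow> 'f set) \<Rightarrow> bool" where
  "semistar A st \<longleftrightarrow>
     (\<forall>E\<in>Fbar A. st E \<in> Fbar A) \<and>
     (\<forall>x E. x \<noteq> 0 \<longrightarrow> E \<in> Fbar A \<longrightarrow> st ((\<lambda>e. x * e) ` E) = (\<lambda>e. x * e) ` st E) \<and>
     (\<forall>E\<in>Fbar A. \<forall>F\<in>Fbar A. E \<subseteq> F \<longrightarrow> st E \<subseteq> st F) \<and>
     (\<forall>E\<in>Fbar A. E \<subseteq> st E) \<and>
     (\<forall>E\<in>Fbar A. st (st E) = st E)"

definition fg_frac :: "'f::field set \<Rightarrow> 'f set \<Rightarrow> bool" where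
  "fg_frac A F \<longleftrightarrow> (\<exists>S. finite S \<and> F = gen_mod A S) \<and> F \<noteq> {0} \<and>
                    (\<exists>d\<in>A. d \<noteq> 0 \<and> (\<forall>x\<in>F. d * x \<in> A))"

definition star_f :: "'f::field set \<Rightarrow> ('f set \<Rightarrow> 'f set) \<Rightarrow> 'f set \<Rightarrow> 'f set" where
  "star_f A st E = \<Union>{st F | F. fg_frac A F \<and> F \<subseteq> E}"

definition finite_type :: "'f::field set \<Rightarrow> ('f set \<Rightarrow> 'f set) \<Rightarrow> bool" where
  "finite_type A st \<longleftrightarrow> (\<forall>E\<in>Fbar A. st E = star_f A st E)"

definition stable :: "'f::field set \<Rightarrow> ('f set \<Rightarrow> 'f set) \<Rightarrow> bool" where
  "stable A st \<longleftrightarrow> (\<forall>E\<in>Fbar A. \<forall>F\<in>Fbar A. st (E \<inter> F) = st E \<inter> st F)"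

definition eq_on_Fbar :: "'f::field set \<Rightarrow> ('f set \<Rightarrow> 'f set) \<Rightarrow> ('f set \<Rightarrow> 'f set) \<Rightarrow> bool" where
  "eq_on_Fbar A st1 st2 \<longleftrightarrow> (\<forall>E\<in>Fbar A. st1 E = st2 E)"

definition quasi_ideal :: "'f::field set \<Rightarrow> ('f set \<Rightarrow> 'f set) \<Rightarrow> 'f set \<Rightarrow> bool" where
  "quasi_ideal A st I \<longleftrightarrow> is_ideal A I \<and> I \<noteq> {0} \<and> st I \<inter> A = I"

definition QMax :: "'f::field set \<Rightarrow> ('f set \<Rightarrow> 'f set) \<Rightarrow> 'f set set" where
  "QMax A st = {P. quasi_ideal A st P \<and> P \<noteq> A \<and>
                   (\<forall>Q. quasi_ideal A st Q \<and> Q \<noteq> A \<and> P \<subseteq> Q \<longrightarrow> Q = P)}"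

definition localization :: "'f::field set \<Rightarrow> 'f set \<Rightarrow> 'f set" where
  "localization A P = {a / s | a s. a \<in> A \<and> s \<in> A \<and> s \<notin> P}"

definition tilde :: "'f::field set \<Rightarrow> ('f set \<Rightarrow> 'f set) \<Rightarrow> 'f set \<Rightarrow> 'f set" where
  "tilde A st E = \<Inter>{gen_mod (localization A P) E | P. P \<in> QMax A (star_f A st)}"

definition to_fract :: "'a::idom \<Rightarrow> 'a fract" where
  "to_fract a = Fract a 1"

text \<open>D is a subring of the field 'k (its quotient field K = 'k). D[X] is a subset of 'k poly,
  K(X) = 'k poly fract, K(X,Y) = ('k poly fract) poly fract.\<close>

definition quot_field_of :: "'k::field set \<Rightarrow> bool" where
  "quot_field_of D \<longleftrightarrow> (\<forall>x. \<exists>a\<in>D. \<exists>b\<in>D. b \<noteq> 0 \<and> x = a / b)"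

definition DX :: "'k::field set \<Rightarrow> 'k poly set" where
  "DX I = {p. \<forall>i. coeff p i \<in> I}"

definition A1 :: "'k::field set \<Rightarrow> 'k poly fract set" where
  "A1 D = to_fract ` DX D"

definition contr :: "'k::field set \<Rightarrow> 'k poly set \<Rightarrow> 'k set" where
  "contr D Q = {d \<in> D. [:d:] \<in> Q}"

definition Delta1 :: "'k::field set \<Rightarrow> ('k set \<Rightarrow> 'k set) \<Rightarrow> 'k poly set set" where
  "Delta1 D st = {Q. prime_ideal (DX D) Q \<and>
      (contr D Q = {0} \<or> (Q = DX (contr D Q) \<and> star_f D st (contr D Q) \<subset> st D))}"

definition polyY :: "'k::field poly set \<Rightarrow> 'k poly fract poly set" where
  "polyY Q = {g. \<forall>i. coeff g i \<in> to_fract ` Q}"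

definition S1 :: "'k::field set \<Rightarrow> ('k set \<Rightarrow> 'k set) \<Rightarrow> 'k poly fract poly set" where
  "S1 D st = polyY (DX D) - \<Union>{polyY Q | Q. Q \<in> Delta1 D st}"

definition locS1 :: "'k::field set \<Rightarrow> ('k set \<Rightarrow> 'k set) \<Rightarrow> 'k poly fract poly fract set" where
  "locS1 D st = {to_fract g / to_fract s | g s. g \<in> polyY (DX D) \<and> s \<in> S1 D st}"

definition embY :: "'k::field poly fract \<Rightarrow> 'k poly fract poly fract" where
  "embY u = to_fract [:u:]"

text \<open>\<open>E^{[st]} = E[Y]_{S_1} \<inter> K_1\<close>.\<close>
definition bracket :: "'k::field set \<Rightarrow> ('k set \<Rightarrow> 'k set) \<Rightarrow> 'k poly fract set \<Rightarrow> 'k poly fract set" where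
  "bracket D st E = {u. embY u \<in> gen_mod (locS1 D st) (embY ` E)}"

end

theory Submission
  imports Defs
begin


lemma gen_mod_least:
  assumes "0 \<in> M" "S \<subseteq> M" "\<And>x y. x \<in> M \<Longrightarrow> y \<in> M \<Longrightarrow> x + y \<in> M"
    "\<And>r x. r \<in> R \<Longrightarrow> x \<in> M \<Longrightarrow> r * x \<in> M"
  shows "gen_mod R S \<subseteq> M"
  unfolding gen_mod_def
  apply (rule Inter_lower)
  using assms by simp

lemma gen_mod_mem: "x \<in> gen_mod R S \<longleftrightarrow> (\<forall>M. 0 \<in> M \<and> S \<subseteq> M \<and> (\<forall>x\<in>M. \<forall>y\<in>M. x + y \<in> M)
                        \<and> (\<forall>r\<in>R. \<forall>x\<in>M. r * x \<in> M) \<longrightarrow> x \<in> M)"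
  unfolding gen_mod_def by simp

lemma gen_mod_sub: "S \<subseteq> gen_mod R S"
  by (auto simp: gen_mod_mem)
lemma gen_mod_0: "0 \<in> gen_mod R S"
  by (auto simp: gen_mod_mem)
lemma gen_mod_add: "x \<in> gen_mod R S \<Longrightarrow> y \<in> gen_mod R S \<Longrightarrow> x + y \<in> gen_mod R S"
  by (auto simp: gen_mod_mem)
lemma gen_mod_mult: "r \<in> R \<Longrightarrow> x \<in> gen_mod R S \<Longrightarrow> r * x \<in> gen_mod R S"
  by (auto simp: gen_mod_mem)
lemma gen_mod_submod: "is_submod R (gen_mod R S)"
  unfolding is_submod_def using gen_mod_0 gen_mod_add gen_mod_mult by blast

lemma gen_mod_subset_submod: "is_submod R M \<Longrightarrow> S \<subseteq> M \<Longrightarrow> gen_mod R S \<subseteq> M"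
  by (rule gen_mod_least) (auto simp: is_submod_def)

lemma gen_mod_mono: "S \<subseteq> T \<Longrightarrow> gen_mod R S \<subseteq> gen_mod R T"
  by (meson gen_mod_sub gen_mod_submod gen_mod_subset_submod order_trans)

lemma gen_mod_idem: "gen_mod R (gen_mod R S) = gen_mod R S"
  by (meson gen_mod_sub gen_mod_submod gen_mod_subset_submod subset_antisym)

lemma gen_mod_R_mono: "R \<subseteq> R' \<Longrightarrow> gen_mod R S \<subseteq> gen_mod R' S"
  by (rule gen_mod_least) (auto intro: gen_mod_0 gen_mod_add gen_mod_mult gen_mod_sub[THEN subsetD])

lemma gen_mod_sum: "finite I \<Longrightarrow> (\<And>i. i \<in> I \<Longrightarrow> f i \<in> gen_mod R S) \<Longrightarrow> sum f I \<in> gen_mod R S"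
  by (induction I rule: finite_induct) (auto intro: gen_mod_0 gen_mod_add)

lemma submod_sum: "finite I \<Longrightarrow> is_submod R M \<Longrightarrow> (\<And>i. i \<in> I \<Longrightarrow> f i \<in> M) \<Longrightarrow> sum f I \<in> M"
  by (induction I rule: finite_induct) (auto simp: is_submod_def)

lemma gen_mod_scale:
  fixes c :: "'f::field"
  assumes c: "c \<noteq> 0"
  shows "gen_mod R ((*) c ` S) = (*) c ` gen_mod R S"
proof
  show "gen_mod R ((*) c ` S) \<subseteq> (*) c ` gen_mod R S"
  proof (rule gen_mod_least)
    show "0 \<in> (*) c ` gen_mod R S" using gen_mod_0 by force
    show "(*) c ` S \<subseteq> (*) c ` gen_mod R S" using gen_mod_sub by blast
    fix x y assume "x \<in> (*) c ` gen_mod R S" "y \<in> (*) c ` gen_mod R S"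
    then obtain a b where "a \<in> gen_mod R S" "b \<in> gen_mod R S" "x = c*a" "y = c*b" by blast
    then show "x + y \<in> (*) c ` gen_mod R S"
      by (metis distrib_left gen_mod_add image_eqI)
  next
    fix r x assume "r \<in> R" "x \<in> (*) c ` gen_mod R S"
    then obtain a where "a \<in> gen_mod R S" "x = c*a" by blast
    then show "r * x \<in> (*) c ` gen_mod R S"
      by (metis \<open>r \<in> R\<close> gen_mod_mult image_eqI mult.left_commute)
  qed
next
  have "gen_mod R S \<subseteq> {x. c * x \<in> gen_mod R ((*) c ` S)}"
  proof (rule gen_mod_least)
    show "0 \<in> {x. c * x \<in> gen_mod R ((*) c ` S)}" using gen_mod_0 by simp
    show "S \<subseteq> {x. c * x \<in> gen_mod R ((*) c ` S)}" using gen_mod_sub by blast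
    show "x + y \<in> {x. c * x \<in> gen_mod R ((*) c ` S)}"
      if "x \<in> {x. c * x \<in> gen_mod R ((*) c ` S)}" "y \<in> {x. c * x \<in> gen_mod R ((*) c ` S)}" for x y
      using that by (simp add: distrib_left gen_mod_add)
    show "r * x \<in> {x. c * x \<in> gen_mod R ((*) c ` S)}"
      if "r \<in> R" "x \<in> {x. c * x \<in> gen_mod R ((*) c ` S)}" for r x
      using that gen_mod_mult[of r R "c*x"] by (simp add: mult.left_commute)
  qed
  then show "(*) c ` gen_mod R S \<subseteq> gen_mod R ((*) c ` S)" by blast
qed

section \<open>subrings\<close>

lemma subring_0: "is_subring R \<Longrightarrow> 0 \<in> R" by (simp add: is_subring_def)
lemma subring_1: "is_subring R \<Longrightarrow> 1 \<in> R" by (simp add: is_subring_def)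
lemma subring_add: "is_subring R \<Longrightarrow> x \<in> R \<Longrightarrow> y \<in> R \<Longrightarrow> x + y \<in> R" by (simp add: is_subring_def)
lemma subring_diff: "is_subring R \<Longrightarrow> x \<in> R \<Longrightarrow> y \<in> R \<Longrightarrow> x - y \<in> R" by (simp add: is_subring_def)
lemma subring_mult: "is_subring R \<Longrightarrow> x \<in> R \<Longrightarrow> y \<in> R \<Longrightarrow> x * y \<in> R" by (simp add: is_subring_def)
lemma subring_uminus: "is_subring R \<Longrightarrow> x \<in> R \<Longrightarrow> - x \<in> R"
  by (metis diff_0 subring_0 subring_diff)
lemma subring_sum: "finite I \<Longrightarrow> is_subring R \<Longrightarrow> (\<And>i. i \<in> I \<Longrightarrow> f i \<in> R) \<Longrightarrow> sum f I \<in> R"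
  by (induction I rule: finite_induct) (auto simp: subring_0 subring_add)
lemma subring_prod: "finite I \<Longrightarrow> is_subring R \<Longrightarrow> (\<And>i. i \<in> I \<Longrightarrow> f i \<in> R) \<Longrightarrow> prod f I \<in> R"
  by (induction I rule: finite_induct) (auto simp: subring_1 subring_mult)
lemma subring_submod: "is_subring R \<Longrightarrow> is_submod R R"
  by (simp add: is_submod_def subring_0 subring_add subring_mult)

lemma submod_0: "is_submod R M \<Longrightarrow> 0 \<in> M" by (simp add: is_submod_def)
lemma submod_add: "is_submod R M \<Longrightarrow> x \<in> M \<Longrightarrow> y \<in> M \<Longrightarrow> x + y \<in> M" by (simp add: is_submod_def)
lemma submod_mult: "is_submod R M \<Longrightarrow> r \<in> R \<Longrightarrow> x \<in> M \<Longrightarrow> r * x \<in> M" by (simp add: is_submod_def)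
lemma submod_uminus: "is_subring R \<Longrightarrow> is_submod R M \<Longrightarrow> x \<in> M \<Longrightarrow> - x \<in> M"
  by (metis minus_one_mult_self mult_minus1 subring_1 subring_uminus submod_mult)
lemma submod_diff: "is_subring R \<Longrightarrow> is_submod R M \<Longrightarrow> x \<in> M \<Longrightarrow> y \<in> M \<Longrightarrow> x - y \<in> M"
  by (metis diff_conv_add_uminus submod_add submod_uminus)

lemma gen_mod_single: "is_subring R \<Longrightarrow> gen_mod R {x} = {r * x | r. r \<in> R}"
proof
  assume R: "is_subring R"
  show "gen_mod R {x} \<subseteq> {r * x | r. r \<in> R}"
    apply (rule gen_mod_least)
    using R apply (auto simp: subring_0 subring_1 subring_add subring_mult)
      apply (metis mult_zero_left subring_0)
     apply (metis mult_1 subring_1)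
    apply (metis distrib_right subring_add)
    by (metis mult.assoc subring_mult)
  show "{r * x | r. r \<in> R} \<subseteq> gen_mod R {x}"
    using gen_mod_mult gen_mod_sub by blast
qed


section \<open>Fractional ideals\<close>

lemma Fbar_submod: "E \<in> Fbar A \<Longrightarrow> is_submod A E" by (simp add: Fbar_def)
lemma Fbar_ne: "E \<in> Fbar A \<Longrightarrow> \<exists>e\<in>E. e \<noteq> 0"
  by (auto simp: Fbar_def is_submod_def)
lemma FbarI: "is_submod A E \<Longrightarrow> e \<in> E \<Longrightarrow> e \<noteq> 0 \<Longrightarrow> E \<in> Fbar A"
  by (auto simp: Fbar_def)

lemma fin_denom:
  fixes A :: "'f::field set"
  assumes "finite S" "is_subring A" "quot_field_of A"
  shows "\<exists>d\<in>A. d \<noteq> 0 \<and> (\<forall>s\<in>S. d * s \<in> A)"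
  using assms(1)
proof (induction S rule: finite_induct)
  case empty then show ?case using assms by (auto intro!: bexI[of _ 1] simp: subring_1)
next
  case (insert x S)
  then obtain d where d: "d \<in> A" "d \<noteq> 0" "\<forall>s\<in>S. d * s \<in> A" by blast
  obtain a b where ab: "a \<in> A" "b \<in> A" "b \<noteq> 0" "x = a / b" using assms(3) unfolding quot_field_of_def by blast
  have "d * b \<in> A" using d ab assms(2) subring_mult by blast
  moreover have "d * b \<noteq> 0" using d ab by simp
  moreover have "\<forall>s\<in>insert x S. d * b * s \<in> A"
  proof
    fix s assume "s \<in> insert x S"
    then show "d * b * s \<in> A"
    proof
      assume "s = x" then have "d * b * s = d * a" using ab by simp
      then show ?thesis using d ab assms(2) subring_mult by metis
    next
      assume "s \<in> S" then have "d * b * s = b * (d * s)" by (simp add: ac_simps)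
      then show ?thesis using d ab assms(2) subring_mult \<open>s \<in> S\<close> by metis
    qed
  qed
  ultimately show ?case by blast
qed

lemma fg_gen:
  fixes A :: "'f::field set"
  assumes "finite S" "is_subring A" "quot_field_of A" "gen_mod A S \<noteq> {0}"
  shows "fg_frac A (gen_mod A S)"
proof -
  obtain d where d: "d \<in> A" "d \<noteq> 0" "\<forall>s\<in>S. d * s \<in> A" using fin_denom assms by blast
  have "gen_mod A S \<subseteq> {x. d * x \<in> A}"
    apply (rule gen_mod_least)
    using d assms(2) by (auto simp: subring_0 distrib_left subring_add mult.left_commute[of d] subring_mult)
  then show ?thesis unfolding fg_frac_def using assms d by blast
qed

lemma fg_Fbar: "fg_frac A F \<Longrightarrow> F \<in> Fbar A"
  unfolding fg_frac_def Fbar_def using gen_mod_submod by blast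

lemma fg_gens: "fg_frac A F \<Longrightarrow> \<exists>T. finite T \<and> F = gen_mod A T"
  unfolding fg_frac_def by blast

lemma fg_single:
  fixes A :: "'f::field set"
  assumes "is_subring A" "quot_field_of A" "x \<noteq> 0"
  shows "fg_frac A (gen_mod A {x})"
  using fg_gen[of "{x}" A] assms gen_mod_sub[of "{x}" A] by auto

lemma submod_scale: "is_submod A E \<Longrightarrow> is_submod A ((*) c ` E)"
proof -
  assume E: "is_submod A E"
  have "0 \<in> (*) c ` E" using E submod_0 by force
  moreover have "x + y \<in> (*) c ` E" if xy: "x \<in> (*) c ` E" "y \<in> (*) c ` E" for x y
  proof -
    obtain a b where "a \<in> E" "b \<in> E" "x = c * a" "y = c * b" using xy by blast
    then have "x + y = c * (a + b)" "a + b \<in> E" using E submod_add[of A E a b] by (auto simp: distrib_left)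
    then show ?thesis by blast
  qed
  moreover have "r * x \<in> (*) c ` E" if rx: "r \<in> A" "x \<in> (*) c ` E" for r x
  proof -
    obtain a where "a \<in> E" "x = c * a" using rx by blast
    then have "r * x = c * (r * a)" "r * a \<in> E" using E submod_mult[of A E r a] rx by (auto simp: mult.left_commute)
    then show ?thesis by blast
  qed
  ultimately show ?thesis unfolding is_submod_def by blast
qed

lemma subring_Fbar: "is_subring (A::'f::field set) \<Longrightarrow> A \<in> Fbar A"
  using FbarI[of A A 1] subring_submod subring_1 by auto

lemma gen_one: "is_subring (A::'f::field set) \<Longrightarrow> gen_mod A {1} = A"
  by (simp add: gen_mod_single)

lemma fg_A: "is_subring (A::'f::field set) \<Longrightarrow> quot_field_of A \<Longrightarrow> fg_frac A A"
  using fg_single[of A 1] gen_one[of A] by simp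

lemma sf_mono: "E \<subseteq> E' \<Longrightarrow> star_f A st E \<subseteq> star_f A st E'"
  unfolding star_f_def by blast

lemma sf_memI: "fg_frac A F \<Longrightarrow> F \<subseteq> E \<Longrightarrow> x \<in> st F \<Longrightarrow> x \<in> star_f A st E"
  unfolding star_f_def by blast

lemma sf_memE: "x \<in> star_f A st E \<Longrightarrow> (\<And>F. fg_frac A F \<Longrightarrow> F \<subseteq> E \<Longrightarrow> x \<in> st F \<Longrightarrow> P) \<Longrightarrow> P"
  unfolding star_f_def by blast

lemma sf_zero: "star_f A st {0} = {}"
  unfolding star_f_def fg_frac_def by (auto simp: gen_mod_0)

locale sstar =
  fixes A :: "'f::field set" and st :: "'f set \<Rightarrow> 'f set"
  assumes sub: "is_subring A" and qf: "quot_field_of A" and ss: "semistar A st"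
begin

lemma st_Fbar: "E \<in> Fbar A \<Longrightarrow> st E \<in> Fbar A" using ss by (simp add: semistar_def)
lemma st_mono: "E \<in> Fbar A \<Longrightarrow> F \<in> Fbar A \<Longrightarrow> E \<subseteq> F \<Longrightarrow> st E \<subseteq> st F"
  using ss by (simp add: semistar_def)
lemma st_ext: "E \<in> Fbar A \<Longrightarrow> E \<subseteq> st E" using ss by (simp add: semistar_def)
lemma st_idem: "E \<in> Fbar A \<Longrightarrow> st (st E) = st E" using ss by (simp add: semistar_def)
lemma st_homog: "x \<noteq> 0 \<Longrightarrow> E \<in> Fbar A \<Longrightarrow> st ((*) x ` E) = (*) x ` st E"
  using ss by (simp add: semistar_def)
lemma st_submod: "E \<in> Fbar A \<Longrightarrow> is_submod A (st E)" using st_Fbar Fbar_submod by blast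

lemma sf_le: "E \<in> Fbar A \<Longrightarrow> star_f A st E \<subseteq> st E"
  unfolding star_f_def using st_mono fg_Fbar by blast

lemma fg_sub_Fbar: "fg_frac A F \<Longrightarrow> F \<subseteq> E \<Longrightarrow> E \<in> Fbar A \<Longrightarrow> st F \<subseteq> st E"
  using st_mono fg_Fbar by blast

lemma sf_fg: "fg_frac A F \<Longrightarrow> star_f A st F = st F"
  using sf_le fg_Fbar sf_memI[of A F F _ st] by blast

lemma sf_ext: "E \<in> Fbar A \<Longrightarrow> E \<subseteq> star_f A st E"
proof
  fix x assume E: "E \<in> Fbar A" and x: "x \<in> E"
  obtain e where e: "e \<in> E" "e \<noteq> 0" using Fbar_ne E by blast
  show "x \<in> star_f A st E"
  proof (cases "x = 0")
    case False
    have F: "fg_frac A (gen_mod A {x})" using fg_single sub qf False by blast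
    have "gen_mod A {x} \<subseteq> E" using gen_mod_subset_submod Fbar_submod E x by blast
    moreover have "x \<in> st (gen_mod A {x})" using st_ext fg_Fbar F gen_mod_sub by blast
    ultimately show ?thesis using sf_memI F by blast
  next
    case True
    have F: "fg_frac A (gen_mod A {e})" using fg_single sub qf e by blast
    have "gen_mod A {e} \<subseteq> E" using gen_mod_subset_submod Fbar_submod E e by blast
    moreover have "0 \<in> st (gen_mod A {e})" using st_submod fg_Fbar F submod_0 by blast
    ultimately show ?thesis using sf_memI F True by blast
  qed
qed

lemma sf_collect:
  assumes "finite S" "S \<subseteq> star_f A st E" "E \<in> Fbar A"
  shows "\<exists>T. finite T \<and> T \<subseteq> E \<and> gen_mod A T \<noteq> {0} \<and> S \<subseteq> st (gen_mod A T)"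
  using assms(1,2)
proof (induction S rule: finite_induct)
  case empty
  obtain e where e: "e \<in> E" "e \<noteq> 0" using Fbar_ne assms(3) by blast
  then have "gen_mod A {e} \<noteq> {0}" using gen_mod_sub by blast
  then show ?case using e by (intro exI[of _ "{e}"]) auto
next
  case (insert s S)
  then obtain T where T: "finite T" "T \<subseteq> E" "gen_mod A T \<noteq> {0}" "S \<subseteq> st (gen_mod A T)" by blast
  from insert obtain F where F: "fg_frac A F" "F \<subseteq> E" "s \<in> st F" by (meson insert_subset sf_memE)
  obtain U where U: "finite U" "F = gen_mod A U" using fg_gens F by blast
  have UE: "U \<subseteq> E" using U F gen_mod_sub by blast
  let ?V = "T \<union> U"
  have fin: "finite ?V" using T U by simp
  have ne: "gen_mod A ?V \<noteq> {0}" using T gen_mod_mono[of T ?V A] gen_mod_0[of A T] by blast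
  have fgV: "fg_frac A (gen_mod A ?V)" using fg_gen fin sub qf ne by blast
  have fgT: "fg_frac A (gen_mod A T)" using fg_gen T sub qf by blast
  have "st (gen_mod A T) \<subseteq> st (gen_mod A ?V)"
    using st_mono fg_Fbar fgV fgT gen_mod_mono[of T ?V A] by blast
  moreover have "st F \<subseteq> st (gen_mod A ?V)"
    using st_mono fg_Fbar fgV F U gen_mod_mono[of U ?V A] by blast
  ultimately show ?case using T UE F fin ne by (intro exI[of _ ?V]) auto
qed

lemma sf_collect_fg:
  assumes "finite S" "S \<subseteq> star_f A st E" "E \<in> Fbar A"
  shows "\<exists>F. fg_frac A F \<and> F \<subseteq> E \<and> S \<subseteq> st F"
proof -
  obtain T where T: "finite T" "T \<subseteq> E" "gen_mod A T \<noteq> {0}" "S \<subseteq> st (gen_mod A T)"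
    using sf_collect[OF assms] by blast
  have "gen_mod A T \<subseteq> E" using gen_mod_subset_submod[OF Fbar_submod[OF assms(3)] T(2)] .
  moreover have "fg_frac A (gen_mod A T)" using fg_gen[OF T(1) sub qf T(3)] .
  moreover have "S \<subseteq> st (gen_mod A T)" using T by blast
  ultimately show ?thesis by blast
qed

lemma sf_submod: "E \<in> Fbar A \<Longrightarrow> is_submod A (star_f A st E)"
  unfolding is_submod_def
proof (intro conjI ballI)
  assume E: "E \<in> Fbar A"
  show "0 \<in> star_f A st E" using sf_ext E Fbar_submod submod_0 by blast
  fix x y assume "x \<in> star_f A st E" "y \<in> star_f A st E"
  then have "{x,y} \<subseteq> star_f A st E" by simp
  then obtain F where F: "fg_frac A F" "F \<subseteq> E" "{x,y} \<subseteq> st F"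
    using sf_collect_fg[of "{x,y}" E] E by blast
  then have "x + y \<in> st F" using st_submod[OF fg_Fbar[OF F(1)]] submod_add by (metis insert_subset)
  then show "x + y \<in> star_f A st E" using sf_memI F by blast
next
  fix r x assume E: "E \<in> Fbar A" and r: "r \<in> A" and "x \<in> star_f A st E"
  then obtain F where F: "fg_frac A F" "F \<subseteq> E" "x \<in> st F" by (meson sf_memE)
  then have "r * x \<in> st F" using st_submod fg_Fbar submod_mult r by blast
  then show "r * x \<in> star_f A st E" using sf_memI F by blast
qed

lemma sf_Fbar: "E \<in> Fbar A \<Longrightarrow> star_f A st E \<in> Fbar A"
  using sf_submod sf_ext Fbar_ne FbarI by (metis subsetD)

lemma sf_idem_le: "E \<in> Fbar A \<Longrightarrow> star_f A st (star_f A st E) \<subseteq> star_f A st E"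
proof
  fix x assume E: "E \<in> Fbar A" and "x \<in> star_f A st (star_f A st E)"
  then obtain G where G: "fg_frac A G" "G \<subseteq> star_f A st E" "x \<in> st G" by (meson sf_memE)
  obtain S where S: "finite S" "G = gen_mod A S" using fg_gens[OF G(1)] by blast
  have "S \<subseteq> star_f A st E" using S G gen_mod_sub by blast
  then obtain F where F: "fg_frac A F" "F \<subseteq> E" "S \<subseteq> st F" using sf_collect_fg[OF S(1) _ E] by blast
  have FF: "F \<in> Fbar A" using fg_Fbar[OF F(1)] .
  have "G \<subseteq> st F" using S(2) gen_mod_subset_submod[OF st_submod[OF FF] F(3)] by simp
  then have "st G \<subseteq> st (st F)" using st_mono[OF fg_Fbar[OF G(1)] st_Fbar[OF FF]] by blast
  then have "x \<in> st F" using st_idem[OF FF] G(3) by blast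
  then show "x \<in> star_f A st E" using sf_memI F(1,2) by blast
qed

lemma sf_idem: "E \<in> Fbar A \<Longrightarrow> star_f A st (star_f A st E) = star_f A st E"
  using sf_idem_le sf_ext[OF sf_Fbar] by (simp add: subset_antisym)

lemma sf_st_A: "star_f A st A = st A"
  using sf_fg[OF fg_A[OF sub qf]] .

lemma sf_sf: "star_f A (star_f A st) E = star_f A st E"
proof -
  have "star_f A (star_f A st) E = \<Union>{star_f A st F | F. fg_frac A F \<and> F \<subseteq> E}"
    by (simp add: star_f_def[of A "star_f A st"])
  also have "\<dots> = \<Union>{st F | F. fg_frac A F \<and> F \<subseteq> E}"
    using sf_fg by metis
  finally show ?thesis by (simp add: star_f_def[of A st])
qed

end


lemma ideal_Fbar: "is_ideal A I \<Longrightarrow> I \<noteq> {0} \<Longrightarrow> I \<in> Fbar A"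
  unfolding is_ideal_def Fbar_def by blast

lemma ideal_submod: "is_ideal A I \<Longrightarrow> is_submod A I" by (simp add: is_ideal_def)
lemma ideal_sub: "is_ideal A I \<Longrightarrow> I \<subseteq> A" by (simp add: is_ideal_def)

lemma ideal_one: "is_ideal A (I::'a::comm_ring_1 set) \<Longrightarrow> 1 \<in> I \<Longrightarrow> I = A"
proof
  assume I: "is_ideal A I" "1 \<in> I"
  show "I \<subseteq> A" using I ideal_sub by blast
  show "A \<subseteq> I"
  proof
    fix a assume "a \<in> A"
    then have "a * 1 \<in> I" using submod_mult[OF ideal_submod[OF I(1)]] I(2) by blast
    then show "a \<in> I" by simp
  qed
qed

lemma submod_Int: "is_submod A M \<Longrightarrow> is_submod A N \<Longrightarrow> is_submod A (M \<inter> N)"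
  unfolding is_submod_def by blast

lemma ne_zero_ex: "0 \<in> I \<Longrightarrow> I \<noteq> {0} \<Longrightarrow> \<exists>x\<in>I. x \<noteq> 0" by blast

lemma chain_fin:
  assumes "finite T" "C \<in> chains F" "C \<noteq> {}" "T \<subseteq> \<Union>C"
  shows "\<exists>J\<in>C. T \<subseteq> J"
  using assms(1,4)
proof (induction T rule: finite_induct)
  case empty then show ?case using assms(3) by blast
next
  case (insert t T)
  then obtain J where J: "J \<in> C" "T \<subseteq> J" by blast
  obtain J' where J': "J' \<in> C" "t \<in> J'" using insert.prems by blast
  from chainsD[OF assms(2) J(1) J'(1)] show ?case
  proof
    assume "J \<subseteq> J'" then show ?thesis using J J' by blast
  next
    assume "J' \<subseteq> J" then show ?thesis using J J' by blast
  qed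
qed

lemma gen_frac:
  fixes A :: "'f::field set"
  assumes A: "is_subring A" and T: "T \<subseteq> A" "1 \<in> T" "0 \<notin> T" "\<And>s t. s \<in> T \<Longrightarrow> t \<in> T \<Longrightarrow> s * t \<in> T"
    and N: "is_submod A N" and S: "S \<subseteq> N"
  shows "gen_mod {a / t | a t. a \<in> A \<and> t \<in> T} S \<subseteq> {n / t | n t. n \<in> N \<and> t \<in> T}"
proof (rule gen_mod_least)
  show "0 \<in> {n / t | n t. n \<in> N \<and> t \<in> T}" using submod_0[OF N] T(2) by force
  show "S \<subseteq> {n / t | n t. n \<in> N \<and> t \<in> T}"
  proof
    fix s assume "s \<in> S" then have "s = s / 1" "s \<in> N" using S by auto
    then show "s \<in> {n / t | n t. n \<in> N \<and> t \<in> T}" using T(2) by blast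
  qed
  fix x y assume "x \<in> {n / t | n t. n \<in> N \<and> t \<in> T}" "y \<in> {n / t | n t. n \<in> N \<and> t \<in> T}"
  then obtain n1 t1 n2 t2 where h: "n1 \<in> N" "t1 \<in> T" "n2 \<in> N" "t2 \<in> T" "x = n1 / t1" "y = n2 / t2" by blast
  have nz: "t1 \<noteq> 0" "t2 \<noteq> 0" using h T(3) by auto
  have "x + y = (t2 * n1 + t1 * n2) / (t1 * t2)" using nz h by (simp add: field_simps)
  moreover have "t2 * n1 + t1 * n2 \<in> N"
    using submod_add[OF N submod_mult[OF N _ h(1)] submod_mult[OF N _ h(3)]] h T(1) by blast
  moreover have "t1 * t2 \<in> T" using T(4) h by blast
  ultimately show "x + y \<in> {n / t | n t. n \<in> N \<and> t \<in> T}" by blast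
next
  fix r x assume "r \<in> {a / t | a t. a \<in> A \<and> t \<in> T}" "x \<in> {n / t | n t. n \<in> N \<and> t \<in> T}"
  then obtain a s n t where h: "a \<in> A" "s \<in> T" "n \<in> N" "t \<in> T" "r = a / s" "x = n / t" by blast
  have "r * x = (a * n) / (s * t)" using h by simp
  moreover have "a * n \<in> N" using submod_mult[OF N h(1) h(3)] .
  moreover have "s * t \<in> T" using T(4) h by blast
  ultimately show "r * x \<in> {n / t | n t. n \<in> N \<and> t \<in> T}" by blast
qed

lemma prime_ideal_ideal: "prime_ideal A P \<Longrightarrow> is_ideal A P" by (simp add: prime_ideal_def)
lemma prime_ideal_ne: "prime_ideal A P \<Longrightarrow> P \<noteq> A" by (simp add: prime_ideal_def)
lemma prime_ideal_mult: "prime_ideal A P \<Longrightarrow> a \<in> A \<Longrightarrow> b \<in> A \<Longrightarrow> a * b \<in> P \<Longrightarrow> a \<in> P \<or> b \<in> P"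
  by (simp add: prime_ideal_def)

lemma loc_gen:
  fixes A :: "'f::field set"
  assumes A: "is_subring A" and P: "prime_ideal A P" and E: "is_submod A E"
    and x: "x \<in> gen_mod (localization A P) E"
  shows "\<exists>e\<in>E. \<exists>s\<in>A. s \<notin> P \<and> x = e / s"
proof -
  have PI: "is_ideal A P" using prime_ideal_ideal[OF P] .
  have one: "1 \<notin> P" using ideal_one[OF PI] prime_ideal_ne[OF P] by blast
  have zero: "0 \<in> P" using submod_0[OF ideal_submod[OF PI]] .
  have L: "localization A P = {a / t | a t. a \<in> A \<and> t \<in> A - P}"
    unfolding localization_def by blast
  have G: "gen_mod {a / t | a t. a \<in> A \<and> t \<in> A - P} E \<subseteq> {n / t | n t. n \<in> E \<and> t \<in> A - P}"
  proof (rule gen_frac[OF A _ _ _ _ E])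
    show "A - P \<subseteq> A" by blast
    show "1 \<in> A - P" using one subring_1[OF A] by blast
    show "0 \<notin> A - P" using zero by blast
    fix s t assume "s \<in> A - P" "t \<in> A - P"
    then show "s * t \<in> A - P" using prime_ideal_mult[OF P] subring_mult[OF A] by blast
  qed simp
  have "x \<in> gen_mod {a / t | a t. a \<in> A \<and> t \<in> A - P} E" using x L by simp
  then have "x \<in> {n / t | n t. n \<in> E \<and> t \<in> A - P}" using G by (rule subsetD[rotated])
  then obtain n t where "n \<in> E" "t \<in> A - P" "x = n / t" by blast
  then show ?thesis by blast
qed

lemma loc_memI:
  fixes A :: "'f::field set"
  assumes A: "is_subring A" and "e \<in> E" "s \<in> A" "s \<notin> P"
  shows "e / s \<in> gen_mod (localization A P) E"
proof -
  have "1 / s \<in> localization A P" unfolding localization_def using assms subring_1[OF A] by blast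
  then have "(1 / s) * e \<in> gen_mod (localization A P) E" using gen_mod_mult gen_mod_sub assms(2) by blast
  then show ?thesis by simp
qed

lemma loc_A: "is_subring (A::'f::field set) \<Longrightarrow> 1 \<notin> P \<Longrightarrow> A \<subseteq> localization A P"
proof
  fix a assume "is_subring A" "1 \<notin> P" "a \<in> A"
  then have "a = a / 1" "1 \<in> A" by (auto simp: subring_1)
  then show "a \<in> localization A P" unfolding localization_def using \<open>a \<in> A\<close> \<open>1 \<notin> P\<close> by blast
qed

lemma tilde_mem: "x \<in> tilde A st E \<longleftrightarrow> (\<forall>P \<in> QMax A (star_f A st). x \<in> gen_mod (localization A P) E)"
  unfolding tilde_def by blast

lemma tilde_mono: "E \<subseteq> F \<Longrightarrow> tilde A st E \<subseteq> tilde A st F"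
proof
  fix x assume "E \<subseteq> F" "x \<in> tilde A st E"
  then show "x \<in> tilde A st F" unfolding tilde_mem using gen_mod_mono[of E F] by (meson subsetD)
qed

lemma tilde_ext: "E \<subseteq> tilde A st E"
proof
  fix x assume "x \<in> E"
  then show "x \<in> tilde A st E" unfolding tilde_mem using gen_mod_sub by (meson subsetD)
qed

lemma tilde_idem: "tilde A st (tilde A st E) = tilde A st E"
proof
  show "tilde A st E \<subseteq> tilde A st (tilde A st E)" using tilde_ext by blast
  show "tilde A st (tilde A st E) \<subseteq> tilde A st E"
  proof
    fix x assume x: "x \<in> tilde A st (tilde A st E)"
    show "x \<in> tilde A st E" unfolding tilde_mem
    proof
      fix P assume P: "P \<in> QMax A (star_f A st)"
      have "tilde A st E \<subseteq> gen_mod (localization A P) E"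
      proof
        fix y assume "y \<in> tilde A st E" then show "y \<in> gen_mod (localization A P) E"
          using P unfolding tilde_mem by blast
      qed
      then have "gen_mod (localization A P) (tilde A st E) \<subseteq> gen_mod (localization A P) E"
        using gen_mod_mono gen_mod_idem by metis
      then show "x \<in> gen_mod (localization A P) E" using x P unfolding tilde_mem by blast
    qed
  qed
qed

context sstar
begin

abbreviation "sf \<equiv> star_f A st"

lemma qfE: obtains a b where "a \<in> A" "b \<in> A" "b \<noteq> 0" "x = a / b"
  using qf[unfolded quot_field_of_def, rule_format, of x] by blast

lemma colon_ideal:
  assumes E: "E \<in> Fbar A"
  shows "is_ideal A {a \<in> A. a * x \<in> E}" "{a \<in> A. a * x \<in> E} \<noteq> {0}"
proof -
  have EM: "is_submod A E" using Fbar_submod[OF E] .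
  show "is_ideal A {a \<in> A. a * x \<in> E}"
    unfolding is_ideal_def is_submod_def
  proof (intro conjI ballI)
    show "{a \<in> A. a * x \<in> E} \<subseteq> A" by blast
    show "0 \<in> {a \<in> A. a * x \<in> E}" using submod_0[OF EM] subring_0[OF sub] by simp
    fix a b assume "a \<in> {a \<in> A. a * x \<in> E}" "b \<in> {a \<in> A. a * x \<in> E}"
    then show "a + b \<in> {a \<in> A. a * x \<in> E}"
      using submod_add[OF EM, of "a * x" "b * x"] subring_add[OF sub, of a b] by (simp add: distrib_right)
  next
    fix r a assume "r \<in> A" "a \<in> {a \<in> A. a * x \<in> E}"
    then show "r * a \<in> {a \<in> A. a * x \<in> E}"
      using submod_mult[OF EM, of r "a * x"] subring_mult[OF sub, of r a] by (simp add: mult.assoc)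
  qed
  obtain e where e: "e \<in> E" "e \<noteq> 0" using Fbar_ne[OF E] by blast
  obtain c d where cd: "c \<in> A" "d \<in> A" "d \<noteq> 0" "e = c / d" using qf[unfolded quot_field_of_def, rule_format, of e] by blast
  obtain a b where ab: "a \<in> A" "b \<in> A" "b \<noteq> 0" "x = a / b" using qf[unfolded quot_field_of_def, rule_format, of x] by blast
  have c0: "c \<noteq> 0" using cd e by auto
  have "(b * c) * x = (a * d) * e" using ab cd by simp
  moreover have "(a * d) * e \<in> E" using submod_mult[OF EM _ e(1)] subring_mult[OF sub ab(1) cd(2)] by blast
  moreover have "b * c \<in> A" using subring_mult[OF sub ab(2) cd(1)] .
  moreover have "b * c \<noteq> 0" using ab c0 by simp
  ultimately have m: "b * c \<in> {a \<in> A. a * x \<in> E}" "b * c \<noteq> 0" by simp_all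
  show "{a \<in> A. a * x \<in> E} \<noteq> {0}"
  proof
    assume "{a \<in> A. a * x \<in> E} = {0}"
    then show False using m by blast
  qed
qed

lemma qclose:
  assumes I: "is_ideal A I" "I \<noteq> {0}" and one: "1 \<notin> sf I"
  shows "quasi_ideal A sf (sf I \<inter> A)" "sf I \<inter> A \<noteq> A" "I \<subseteq> sf I \<inter> A"
proof -
  have IF: "I \<in> Fbar A" using ideal_Fbar[OF I] .
  show IJ: "I \<subseteq> sf I \<inter> A" using sf_ext[OF IF] ideal_sub[OF I(1)] by blast
  show "sf I \<inter> A \<noteq> A" using one subring_1[OF sub] by blast
  have Jid: "is_ideal A (sf I \<inter> A)"
    unfolding is_ideal_def using submod_Int[OF sf_submod[OF IF] subring_submod[OF sub]] by blast
  have Jne: "sf I \<inter> A \<noteq> {0}" using IJ I(2) submod_0[OF ideal_submod[OF I(1)]] by blast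
  have JF: "sf I \<inter> A \<in> Fbar A" using ideal_Fbar[OF Jid Jne] .
  have "sf (sf I \<inter> A) \<subseteq> sf (sf I)" using sf_mono by blast
  also have "\<dots> = sf I" using sf_idem[OF IF] .
  finally have "sf (sf I \<inter> A) \<inter> A = sf I \<inter> A" using sf_ext[OF JF] by blast
  then show "quasi_ideal A sf (sf I \<inter> A)" unfolding quasi_ideal_def using Jid Jne by blast
qed

lemma quasiD: "quasi_ideal A' st' J \<Longrightarrow> is_ideal A' J" "quasi_ideal A' st' J \<Longrightarrow> J \<noteq> {0}"
  "quasi_ideal A' st' J \<Longrightarrow> st' J \<inter> A' = J"
  by (simp_all add: quasi_ideal_def)

lemma quasi_one: "quasi_ideal A sf J \<Longrightarrow> J \<noteq> A \<Longrightarrow> 1 \<notin> sf J"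
proof
  assume J: "quasi_ideal A sf J" "J \<noteq> A" "1 \<in> sf J"
  then have "1 \<in> J" using quasiD(3)[OF J(1)] subring_1[OF sub] by blast
  then show False using ideal_one[OF quasiD(1)[OF J(1)]] J(2) by blast
qed

lemma zorn_qmax:
  assumes I: "is_ideal A I" "I \<noteq> {0}" and one: "1 \<notin> sf I"
  shows "\<exists>P\<in>QMax A sf. I \<subseteq> P"
proof -
  define \<F> where "\<F> = {J. quasi_ideal A sf J \<and> J \<noteq> A \<and> I \<subseteq> J}"
  have J0: "sf I \<inter> A \<in> \<F>" using qclose[OF I one] unfolding \<F>_def by blast
  have "\<forall>C\<in>chains \<F>. \<exists>U\<in>\<F>. \<forall>X\<in>C. X \<subseteq> U"
  proof
    fix C assume C: "C \<in> chains \<F>"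
    show "\<exists>U\<in>\<F>. \<forall>X\<in>C. X \<subseteq> U"
    proof (cases "C = {}")
      case True then show ?thesis using J0 by blast
    next
      case False
      have CF: "C \<subseteq> \<F>" using chainsD2[OF C] .
      have Jq: "\<And>J. J \<in> C \<Longrightarrow> quasi_ideal A sf J \<and> J \<noteq> A \<and> I \<subseteq> J" using CF unfolding \<F>_def by blast
      let ?U = "\<Union>C"
      have sm: "\<And>J. J \<in> C \<Longrightarrow> is_submod A J" using Jq quasiD(1) ideal_submod by blast
      have JA: "\<And>J. J \<in> C \<Longrightarrow> J \<subseteq> A" using Jq quasiD(1) ideal_sub by blast
      have UA: "?U \<subseteq> A" using JA by blast
      have IU: "I \<subseteq> ?U" using Jq False by blast
      have Usub: "is_submod A ?U"
        unfolding is_submod_def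
      proof (intro conjI ballI)
        obtain J where "J \<in> C" using False by blast
        then show "0 \<in> ?U" using submod_0[OF sm] by blast
      next
        fix x y assume "x \<in> ?U" "y \<in> ?U"
        then obtain J1 J2 where J: "J1 \<in> C" "J2 \<in> C" "x \<in> J1" "y \<in> J2" by blast
        from chainsD[OF C J(1) J(2)] show "x + y \<in> ?U"
        proof
          assume "J1 \<subseteq> J2" then show ?thesis using submod_add[OF sm[OF J(2)]] J by blast
        next
          assume "J2 \<subseteq> J1" then show ?thesis using submod_add[OF sm[OF J(1)]] J by blast
        qed
      next
        fix r x assume "r \<in> A" "x \<in> ?U"
        then obtain J where "J \<in> C" "x \<in> J" by blast
        then show "r * x \<in> ?U" using submod_mult[OF sm \<open>r \<in> A\<close>] by blast
      qed
      have Uid: "is_ideal A ?U" unfolding is_ideal_def using UA Usub by blast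
      have Une: "?U \<noteq> {0}" using IU I(2) submod_0[OF ideal_submod[OF I(1)]] by blast
      have UF: "?U \<in> Fbar A" using ideal_Fbar[OF Uid Une] .
      have "sf ?U \<inter> A \<subseteq> ?U"
      proof
        fix x assume x: "x \<in> sf ?U \<inter> A"
        then obtain F where F: "fg_frac A F" "F \<subseteq> ?U" "x \<in> st F" by (meson IntD1 sf_memE)
        obtain T where T: "finite T" "F = gen_mod A T" using fg_gens[OF F(1)] by blast
        have "T \<subseteq> ?U" using T F gen_mod_sub by blast
        then obtain J where J: "J \<in> C" "T \<subseteq> J" using chain_fin[OF T(1) C False] by blast
        have "F \<subseteq> J" using T(2) gen_mod_subset_submod[OF sm[OF J(1)] J(2)] by simp
        then have "x \<in> sf J" using sf_memI[OF F(1)] F(3) by blast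
        then have "x \<in> J" using quasiD(3)[of A sf J] Jq[OF J(1)] x by blast
        then show "x \<in> ?U" using J by blast
      qed
      then have "sf ?U \<inter> A = ?U" using sf_ext[OF UF] UA by blast
      then have Uq: "quasi_ideal A sf ?U" unfolding quasi_ideal_def using Uid Une by blast
      have "1 \<notin> ?U"
      proof
        assume "1 \<in> ?U"
        then obtain J where "J \<in> C" "1 \<in> J" by blast
        then show False using Jq ideal_one[OF quasiD(1)] by blast
      qed
      then have "?U \<noteq> A" using subring_1[OF sub] by blast
      then have "?U \<in> \<F>" unfolding \<F>_def using Uq IU by blast
      then show ?thesis by blast
    qed
  qed
  then obtain M where M: "M \<in> \<F>" "\<forall>X\<in>\<F>. M \<subseteq> X \<longrightarrow> X = M" using Zorn_Lemma2 by blast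
  have "M \<in> QMax A sf" unfolding QMax_def
  proof (intro CollectI conjI allI impI)
    show "quasi_ideal A sf M" "M \<noteq> A" using M(1) unfolding \<F>_def by auto
    fix Q assume "quasi_ideal A sf Q \<and> Q \<noteq> A \<and> M \<subseteq> Q"
    then have "Q \<in> \<F>" "M \<subseteq> Q" using M(1) unfolding \<F>_def by auto
    then show "Q = M" using M(2) by blast
  qed
  then show ?thesis using M(1) unfolding \<F>_def by blast
qed

lemma qmax_quasi: "P \<in> QMax A sf \<Longrightarrow> quasi_ideal A sf P" by (simp add: QMax_def)
lemma qmax_ne: "P \<in> QMax A sf \<Longrightarrow> P \<noteq> A" by (simp add: QMax_def)
lemma qmax_one: "P \<in> QMax A sf \<Longrightarrow> 1 \<notin> sf P"
  using quasi_one qmax_quasi qmax_ne by blast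
lemma qmax_ideal: "P \<in> QMax A sf \<Longrightarrow> is_ideal A P"
  using qmax_quasi unfolding quasi_ideal_def by blast
lemma qmax_max: "P \<in> QMax A sf \<Longrightarrow> quasi_ideal A sf Q \<Longrightarrow> Q \<noteq> A \<Longrightarrow> P \<subseteq> Q \<Longrightarrow> Q = P"
  by (simp add: QMax_def)

lemma fg_scale:
  assumes F: "fg_frac A F" and b: "b \<noteq> 0"
  shows "fg_frac A ((*) b ` F)"
proof -
  obtain T where T: "finite T" "F = gen_mod A T" using fg_gens[OF F] by blast
  have eq: "(*) b ` F = gen_mod A ((*) b ` T)" using gen_mod_scale[OF b] T by simp
  have "F \<noteq> {0}" using F unfolding fg_frac_def by blast
  then obtain f where "f \<in> F" "f \<noteq> 0" using T gen_mod_0[of A T] by blast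
  then have "b * f \<in> (*) b ` F" "b * f \<noteq> 0" using b by auto
  then have "gen_mod A ((*) b ` T) \<noteq> {0}" using eq by auto
  then show ?thesis using fg_gen[OF _ sub qf] T eq by simp
qed

lemma qmax_prime:
  assumes P: "P \<in> QMax A sf"
  shows "prime_ideal A P"
  unfolding prime_ideal_def
proof (intro conjI)
  show PI: "is_ideal A P" using qmax_ideal[OF P] .
  show "P \<noteq> A" using qmax_ne[OF P] .
  show "\<forall>a\<in>A. \<forall>b\<in>A. a * b \<in> P \<longrightarrow> a \<in> P \<or> b \<in> P"
  proof (intro ballI impI)
  fix a b assume a: "a \<in> A" and b: "b \<in> A" and ab: "a * b \<in> P"
  show "a \<in> P \<or> b \<in> P"
  proof (cases "a \<in> P")
    case True then show ?thesis by blast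
  next
    case False note aP = this
    have "b \<in> P"
    proof (cases "b = 0")
      case True then show ?thesis using submod_0[OF ideal_submod[OF PI]] by simp
    next
      case b0: False
      let ?J = "gen_mod A (insert a P)"
      have PA: "P \<subseteq> A" using ideal_sub[OF PI] .
      have Jid: "is_ideal A ?J" unfolding is_ideal_def
        using gen_mod_submod gen_mod_subset_submod[OF subring_submod[OF sub]] PA a by blast
      have PJ: "P \<subseteq> ?J" using gen_mod_sub by blast
      have Pne: "P \<noteq> {0}" using qmax_quasi[OF P] unfolding quasi_ideal_def by blast
      have Jne: "?J \<noteq> {0}" using PJ Pne submod_0[OF ideal_submod[OF PI]] by blast
      have one: "1 \<in> sf ?J"
      proof (rule ccontr)
        assume n1: "1 \<notin> sf ?J"
        note q = qclose[OF Jid Jne n1]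
        have "P \<subseteq> sf ?J \<inter> A" using PJ q(3) by blast
        then have "sf ?J \<inter> A = P" using qmax_max[OF P q(1) q(2)] by blast
        moreover have "a \<in> sf ?J \<inter> A" using q(3) gen_mod_sub by blast
        ultimately show False using aP by blast
      qed
      then obtain F where F: "fg_frac A F" "F \<subseteq> ?J" "1 \<in> st F" by (meson sf_memE)
      have "?J \<subseteq> {x. b * x \<in> P}"
      proof (rule gen_mod_least)
        show "0 \<in> {x. b * x \<in> P}" using submod_0[OF ideal_submod[OF PI]] by simp
        show "insert a P \<subseteq> {x. b * x \<in> P}"
          using ab submod_mult[OF ideal_submod[OF PI] b] by (auto simp: mult.commute)
        show "x + y \<in> {x. b * x \<in> P}" if "x \<in> {x. b * x \<in> P}" "y \<in> {x. b * x \<in> P}" for x y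
          using that submod_add[OF ideal_submod[OF PI]] by (simp add: distrib_left)
        show "r * x \<in> {x. b * x \<in> P}" if "r \<in> A" "x \<in> {x. b * x \<in> P}" for r x
          using that submod_mult[OF ideal_submod[OF PI]] by (metis mem_Collect_eq mult.left_commute)
      qed
      then have bFP: "(*) b ` F \<subseteq> P" using F(2) by blast
      have "b * 1 \<in> (*) b ` st F" using F(3) by blast
      then have "b \<in> st ((*) b ` F)" using st_homog[OF b0 fg_Fbar[OF F(1)]] by simp
      then have "b \<in> sf P" using sf_memI[OF fg_scale[OF F(1) b0] bFP] by blast
      then show "b \<in> P" using quasiD(3)[OF qmax_quasi[OF P]] b by blast
    qed
    then show ?thesis by blast
  qed
  qed
qed

lemma tilde_le_sf:
  assumes E: "E \<in> Fbar A"
  shows "tilde A st E \<subseteq> sf E"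
proof
  fix x assume x: "x \<in> tilde A st E"
  show "x \<in> sf E"
  proof (cases "x = 0")
    case True then show ?thesis using sf_ext[OF E] submod_0[OF Fbar_submod[OF E]] by blast
  next
    case x0: False
    let ?I = "{a \<in> A. a * x \<in> E}"
    note I = colon_ideal[OF E, of x]
    have "1 \<in> sf ?I"
    proof (rule ccontr)
      assume "1 \<notin> sf ?I"
      then obtain P where P: "P \<in> QMax A sf" "?I \<subseteq> P" using zorn_qmax[OF I] by blast
      have "x \<in> gen_mod (localization A P) E" using x P(1) unfolding tilde_mem by blast
      then obtain e s where es: "e \<in> E" "s \<in> A" "s \<notin> P" "x = e / s"
        using loc_gen[OF sub qmax_prime[OF P(1)] Fbar_submod[OF E]] by blast
      have "s \<noteq> 0" using es(3) submod_0[OF ideal_submod[OF qmax_ideal[OF P(1)]]] by blast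
      then have "s * x = e" using es by simp
      then have "s \<in> ?I" using es by simp
      then show False using P(2) es(3) by blast
    qed
    then obtain F where F: "fg_frac A F" "F \<subseteq> ?I" "1 \<in> st F" by (meson sf_memE)
    have xF: "(*) x ` F \<subseteq> E" using F(2) by (auto simp: mult.commute)
    have "x * 1 \<in> (*) x ` st F" using F(3) by blast
    then have "x \<in> st ((*) x ` F)" using st_homog[OF x0 fg_Fbar[OF F(1)]] by simp
    then show "x \<in> sf E" using sf_memI[OF fg_scale[OF F(1) x0] xF] by blast
  qed
qed

lemma Fbar_scale: "E \<in> Fbar A \<Longrightarrow> c \<noteq> 0 \<Longrightarrow> (*) c ` E \<in> Fbar A"
proof -
  assume E: "E \<in> Fbar A" and c: "c \<noteq> 0"
  obtain e where e: "e \<in> E" "e \<noteq> 0" using Fbar_ne[OF E] by blast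
  have "c * e \<in> (*) c ` E" "c * e \<noteq> 0" using e c by auto
  then show ?thesis using FbarI[OF submod_scale[OF Fbar_submod[OF E]]] by blast
qed

lemma stable_le_tilde:
  assumes stab: "stable A st" and ft: "finite_type A st" and E: "E \<in> Fbar A"
  shows "st E \<subseteq> tilde A st E"
proof
  fix x assume x: "x \<in> st E"
  show "x \<in> tilde A st E" unfolding tilde_mem
  proof
    fix P assume P: "P \<in> QMax A sf"
    show "x \<in> gen_mod (localization A P) E"
    proof (cases "x = 0")
      case True then show ?thesis using gen_mod_0 by simp
    next
      case x0: False
      let ?I = "{a \<in> A. a * x \<in> E}"
      note I = colon_ideal[OF E, of x]
      have ix: "inverse x \<noteq> 0" using x0 by simp
      have E': "(*) (inverse x) ` E \<in> Fbar A" using Fbar_scale[OF E ix] .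
      have AF: "A \<in> Fbar A" using subring_Fbar[OF sub] .
      have Ieq: "?I = (*) (inverse x) ` E \<inter> A"
      proof
        show "?I \<subseteq> (*) (inverse x) ` E \<inter> A"
        proof
          fix a assume "a \<in> ?I"
          then have "a = inverse x * (a * x)" "a * x \<in> E" "a \<in> A" using x0 by auto
          then show "a \<in> (*) (inverse x) ` E \<inter> A" by blast
        qed
        show "(*) (inverse x) ` E \<inter> A \<subseteq> ?I"
        proof
          fix a assume "a \<in> (*) (inverse x) ` E \<inter> A"
          then obtain e where "e \<in> E" "a = inverse x * e" "a \<in> A" by blast
          then have "a * x = e" "a \<in> A" "e \<in> E" using x0 by auto
          then show "a \<in> ?I" by simp
        qed
      qed
      have "st ?I = st ((*) (inverse x) ` E) \<inter> st A" using stab E' AF Ieq unfolding stable_def by metis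
      also have "\<dots> = (*) (inverse x) ` st E \<inter> st A" using st_homog[OF ix E] by simp
      finally have stI: "st ?I = (*) (inverse x) ` st E \<inter> st A" .
      have "1 = inverse x * x" using x0 by simp
      then have "1 \<in> (*) (inverse x) ` st E" using x by blast
      moreover have "1 \<in> st A" using st_ext[OF AF] subring_1[OF sub] by blast
      ultimately have "1 \<in> st ?I" using stI by blast
      then have "1 \<in> sf ?I" using ft ideal_Fbar[OF I] unfolding finite_type_def by blast
      have "\<not> ?I \<subseteq> P"
      proof
        assume "?I \<subseteq> P"
        then have "sf ?I \<subseteq> sf P" using sf_mono by blast
        then show False using \<open>1 \<in> sf ?I\<close> qmax_one[OF P] by blast
      qed
      then obtain a where a: "a \<in> A" "a * x \<in> E" "a \<notin> P" by blast
      have "a \<noteq> 0" using a(3) submod_0[OF ideal_submod[OF qmax_ideal[OF P]]] by blast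
      then have "x = (a * x) / a" by simp
      then show ?thesis using loc_memI[OF sub a(2) a(1) a(3)] by simp
    qed
  qed
qed

lemma stable_tilde_eq:
  assumes "stable A st" "finite_type A st"
  shows "eq_on_Fbar A (tilde A st) st"
  unfolding eq_on_Fbar_def
proof
  fix E assume E: "E \<in> Fbar A"
  have "tilde A st E \<subseteq> st E" using tilde_le_sf[OF E] assms(2) E unfolding finite_type_def by blast
  then show "tilde A st E = st E" using stable_le_tilde[OF assms E] by blast
qed

end


lemma cond_gen:
  fixes t :: "'f::field set \<Rightarrow> 'f set"
  assumes PA: "P \<subseteq> A" and mono: "\<And>F. fg_frac A F \<Longrightarrow> F \<subseteq> A \<Longrightarrow> t F \<subseteq> t A"
    and one: "1 \<in> t A" and up: "\<And>F. fg_frac A F \<Longrightarrow> 1 \<in> t F \<Longrightarrow> t A \<subseteq> t F"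
  shows "star_f A t P \<subset> t A \<longleftrightarrow> 1 \<notin> star_f A t P"
proof -
  have le: "star_f A t P \<subseteq> t A"
  proof
    fix x assume "x \<in> star_f A t P"
    then obtain F where F: "fg_frac A F" "F \<subseteq> P" "x \<in> t F" by (meson sf_memE)
    then show "x \<in> t A" using mono[OF F(1)] PA by blast
  qed
  show ?thesis
  proof
    assume lt: "star_f A t P \<subset> t A"
    show "1 \<notin> star_f A t P"
    proof
      assume "1 \<in> star_f A t P"
      then obtain F where F: "fg_frac A F" "F \<subseteq> P" "1 \<in> t F" by (meson sf_memE)
      have "t F \<subseteq> star_f A t P" using sf_memI[OF F(1) F(2)] by blast
      then show False using up[OF F(1) F(3)] lt by blast
    qed
  next
    assume "1 \<notin> star_f A t P"
    then show "star_f A t P \<subset> t A" using le one by blast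
  qed
qed

context sstar
begin

lemma cond_st: "P \<subseteq> A \<Longrightarrow> star_f A st P \<subset> st A \<longleftrightarrow> 1 \<notin> star_f A st P"
proof (rule cond_gen)
  have AF: "A \<in> Fbar A" using subring_Fbar[OF sub] .
  show "1 \<in> st A" using st_ext[OF AF] subring_1[OF sub] by blast
  fix F assume F: "fg_frac A F"
  show "F \<subseteq> A \<Longrightarrow> st F \<subseteq> st A" using st_mono[OF fg_Fbar[OF F] AF] by blast
  assume "1 \<in> st F"
  have FF: "st F \<in> Fbar A" using st_Fbar[OF fg_Fbar[OF F]] .
  have "A \<subseteq> st F"
  proof
    fix a assume "a \<in> A"
    then have "a * 1 \<in> st F" using submod_mult[OF Fbar_submod[OF FF]] \<open>1 \<in> st F\<close> by blast
    then show "a \<in> st F" by simp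
  qed
  then have "st A \<subseteq> st (st F)" using st_mono[OF AF FF] by blast
  then show "st A \<subseteq> st F" using st_idem[OF fg_Fbar[OF F]] by simp
qed

lemma cond_tilde0: "P \<subseteq> A \<Longrightarrow> star_f A (tilde A st) P \<subset> tilde A st A \<longleftrightarrow> 1 \<notin> star_f A (tilde A st) P"
proof (rule cond_gen)
  show "1 \<in> tilde A st A" using tilde_ext subring_1[OF sub] by blast
  fix F assume F: "fg_frac A F"
  show "F \<subseteq> A \<Longrightarrow> tilde A st F \<subseteq> tilde A st A" using tilde_mono by blast
  assume one: "1 \<in> tilde A st F"
  have "A \<subseteq> tilde A st F"
  proof
    fix a assume a: "a \<in> A"
    show "a \<in> tilde A st F" unfolding tilde_mem
    proof
      fix M assume M: "M \<in> QMax A sf"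
      have "1 \<in> gen_mod (localization A M) F" using one M unfolding tilde_mem by blast
      moreover have "a \<in> localization A M"
        using loc_A[OF sub] a ideal_one[OF qmax_ideal[OF M]] qmax_ne[OF M] by blast
      ultimately have "a * 1 \<in> gen_mod (localization A M) F" using gen_mod_mult by blast
      then show "a \<in> gen_mod (localization A M) F" by simp
    qed
  qed
  then have "tilde A st A \<subseteq> tilde A st (tilde A st F)" using tilde_mono by blast
  then show "tilde A st A \<subseteq> tilde A st F" using tilde_idem by blast
qed

lemma one_tilde_iff:
  assumes PA: "P \<subseteq> A"
  shows "1 \<in> star_f A (tilde A st) P \<longleftrightarrow> 1 \<in> star_f A st P"
proof
  assume "1 \<in> star_f A (tilde A st) P"
  then obtain F where F: "fg_frac A F" "F \<subseteq> P" "1 \<in> tilde A st F" by (meson sf_memE)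
  have "1 \<in> sf F" using tilde_le_sf[OF fg_Fbar[OF F(1)]] F(3) by blast
  then show "1 \<in> sf P" using sf_mono[OF F(2)] by blast
next
  assume "1 \<in> sf P"
  then obtain F where F: "fg_frac A F" "F \<subseteq> P" "1 \<in> st F" by (meson sf_memE)
  have "1 \<in> tilde A st F" unfolding tilde_mem
  proof
    fix M assume M: "M \<in> QMax A sf"
    have "\<not> F \<subseteq> M"
    proof
      assume "F \<subseteq> M"
      then have "1 \<in> sf M" using sf_memI[OF F(1)] F(3) by blast
      then show False using qmax_one[OF M] by blast
    qed
    then obtain a where a: "a \<in> F" "a \<notin> M" by blast
    have aA: "a \<in> A" using a F(2) PA by blast
    have "a \<noteq> 0" using a(2) submod_0[OF ideal_submod[OF qmax_ideal[OF M]]] by blast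
    then have "1 = a / a" by simp
    then show "1 \<in> gen_mod (localization A M) F" using loc_memI[OF sub a(1) aA a(2)] by simp
  qed
  then show "1 \<in> star_f A (tilde A st) P" using sf_memI[OF F(1) F(2)] by blast
qed

lemma cond_tilde: "P \<subseteq> A \<Longrightarrow> star_f A (tilde A st) P \<subset> tilde A st A \<longleftrightarrow> 1 \<notin> star_f A st P"
  using cond_tilde0 one_tilde_iff by blast

lemma cond_sf: "P \<subseteq> A \<Longrightarrow> star_f A (star_f A st) P \<subset> star_f A st A \<longleftrightarrow> 1 \<notin> star_f A st P"
  using cond_st sf_sf sf_st_A by simp

end


definition Rpoly :: "'a::comm_ring_1 set \<Rightarrow> 'a poly set" where
  "Rpoly R = {p. \<forall>i. coeff p i \<in> R}"

lemma DX_Rpoly: "DX D = Rpoly D" by (simp add: DX_def Rpoly_def)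
lemma polyY_Rpoly: "polyY Q = Rpoly (to_fract ` Q)" by (simp add: polyY_def Rpoly_def)

lemma RpolyI: "(\<And>i. coeff p i \<in> R) \<Longrightarrow> p \<in> Rpoly R" by (simp add: Rpoly_def)
lemma RpolyD: "p \<in> Rpoly R \<Longrightarrow> coeff p i \<in> R" by (simp add: Rpoly_def)

lemma Rpoly_Int: "Rpoly (E \<inter> F) = Rpoly E \<inter> Rpoly F" by (auto simp: Rpoly_def)
lemma Rpoly_mono: "E \<subseteq> F \<Longrightarrow> Rpoly E \<subseteq> Rpoly F" by (auto simp: Rpoly_def)

lemma Rpoly_const: "c \<in> R \<Longrightarrow> 0 \<in> R \<Longrightarrow> [:c:] \<in> Rpoly R"
  by (rule RpolyI) (auto simp: coeff_pCons split: nat.split)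

lemma Rpoly_monom: "c \<in> R \<Longrightarrow> 0 \<in> R \<Longrightarrow> monom c n \<in> Rpoly R"
  by (rule RpolyI) (auto simp: coeff_monom)

lemma Rpoly_0: "0 \<in> R \<Longrightarrow> 0 \<in> Rpoly R" by (rule RpolyI) simp

lemma Rpoly_1: "0 \<in> R \<Longrightarrow> 1 \<in> R \<Longrightarrow> 1 \<in> Rpoly R" by (rule RpolyI) (simp add: coeff_1)

lemma Rpoly_mult_submod:
  assumes M: "is_submod R M" and p: "p \<in> Rpoly M" and q: "q \<in> Rpoly R"
  shows "q * p \<in> Rpoly M" "p * q \<in> Rpoly M"
proof -
  show "q * p \<in> Rpoly M"
  proof (rule RpolyI)
    fix n
    have "coeff (q * p) n = (\<Sum>i\<le>n. coeff q i * coeff p (n - i))" by (rule coeff_mult)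
    also have "\<dots> \<in> M"
      by (rule submod_sum[OF _ M]) (use M p q RpolyD submod_mult in blast)+
    finally show "coeff (q * p) n \<in> M" .
  qed
  then show "p * q \<in> Rpoly M" by (simp add: mult.commute)
qed

lemma Rpoly_submod:
  assumes M: "is_submod R M"
  shows "is_submod (Rpoly R) (Rpoly M)"
  unfolding is_submod_def
proof (intro conjI ballI)
  show "0 \<in> Rpoly M" using Rpoly_0 submod_0[OF M] by blast
  fix x y assume "x \<in> Rpoly M" "y \<in> Rpoly M"
  then show "x + y \<in> Rpoly M" using submod_add[OF M] by (auto simp: Rpoly_def)
next
  fix r x assume "r \<in> Rpoly R" "x \<in> Rpoly M"
  then show "r * x \<in> Rpoly M" using Rpoly_mult_submod(1)[OF M] by blast
qed

lemma Rpoly_subring: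
  assumes R: "is_subring R"
  shows "is_subring (Rpoly R)"
  unfolding is_subring_def
proof (intro conjI ballI)
  show "0 \<in> Rpoly R" using Rpoly_0 subring_0[OF R] by blast
  show "1 \<in> Rpoly R" using Rpoly_1 subring_0[OF R] subring_1[OF R] by blast
  fix x y assume x: "x \<in> Rpoly R" and y: "y \<in> Rpoly R"
  show "x + y \<in> Rpoly R" using x y subring_add[OF R] by (auto simp: Rpoly_def)
  show "x - y \<in> Rpoly R" using x y subring_diff[OF R] by (auto simp: Rpoly_def)
  show "x * y \<in> Rpoly R" using Rpoly_mult_submod(1)[OF subring_submod[OF R] y x] .
qed

lemma Rpoly_prime:
  assumes R: "is_subring R" and P: "prime_ideal R P"
  shows "prime_ideal (Rpoly R) (Rpoly P)"
  unfolding prime_ideal_def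
proof (intro conjI)
  have PI: "is_ideal R P" using prime_ideal_ideal[OF P] .
  have PM: "is_submod R P" using ideal_submod[OF PI] .
  have PR: "P \<subseteq> R" using ideal_sub[OF PI] .
  have one: "1 \<notin> P" using ideal_one[OF PI] prime_ideal_ne[OF P] by blast
  show "is_ideal (Rpoly R) (Rpoly P)" unfolding is_ideal_def
    using Rpoly_mono[OF PR] Rpoly_submod[OF PM] by blast
  have "1 \<in> Rpoly R" using Rpoly_1 subring_0[OF R] subring_1[OF R] by blast
  moreover have "1 \<notin> Rpoly P" using one RpolyD[of 1 P 0] by auto
  ultimately show "Rpoly P \<noteq> Rpoly R" by blast
  show "\<forall>f\<in>Rpoly R. \<forall>g\<in>Rpoly R. f * g \<in> Rpoly P \<longrightarrow> f \<in> Rpoly P \<or> g \<in> Rpoly P"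
  proof (intro ballI impI)
    fix f g assume f: "f \<in> Rpoly R" and g: "g \<in> Rpoly R" and fg: "f * g \<in> Rpoly P"
    show "f \<in> Rpoly P \<or> g \<in> Rpoly P"
    proof (rule ccontr)
      assume "\<not> (f \<in> Rpoly P \<or> g \<in> Rpoly P)"
      then have ex: "\<exists>i. coeff f i \<notin> P" "\<exists>j. coeff g j \<notin> P" by (auto simp: Rpoly_def)
      define i where "i = (LEAST i. coeff f i \<notin> P)"
      define j where "j = (LEAST j. coeff g j \<notin> P)"
      have fi: "coeff f i \<notin> P" unfolding i_def using LeastI_ex[OF ex(1)] .
      have gj: "coeff g j \<notin> P" unfolding j_def using LeastI_ex[OF ex(2)] .
      have fl: "\<And>k. k < i \<Longrightarrow> coeff f k \<in> P" unfolding i_def using not_less_Least by blast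
      have gl: "\<And>k. k < j \<Longrightarrow> coeff g k \<in> P" unfolding j_def using not_less_Least by blast
      let ?t = "\<lambda>k. coeff f k * coeff g (i + j - k)"
      have c: "coeff (f * g) (i + j) = ?t i + (\<Sum>k\<in>{..i+j} - {i}. ?t k)"
        by (simp add: coeff_mult sum.remove[of "{..i+j}" i])
      have rest: "(\<Sum>k\<in>{..i+j} - {i}. ?t k) \<in> P"
      proof (rule submod_sum[OF _ PM])
        show "finite ({..i+j} - {i})" by simp
        fix k assume k: "k \<in> {..i+j} - {i}"
        show "?t k \<in> P"
        proof (cases "k < i")
          case True
          then have "coeff g (i + j - k) * coeff f k \<in> P"
            using submod_mult[OF PM] RpolyD[OF g] fl by blast
          then show ?thesis by (simp add: mult.commute)
        next
          case False
          then have "i + j - k < j" using k by auto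
          then show ?thesis using submod_mult[OF PM] RpolyD[OF f] gl by blast
        qed
      qed
      have "coeff (f * g) (i + j) \<in> P" using RpolyD[OF fg] .
      then have "?t i \<in> P" using c rest submod_diff[OF R PM] by (metis add_diff_cancel_right')
      then have "coeff f i * coeff g j \<in> P" by simp
      then show False using prime_ideal_mult[OF P] RpolyD[OF f] RpolyD[OF g] fi gj by blast
    qed
  qed
qed

lemma to_fract_add: "to_fract (a + b) = to_fract a + to_fract b" by (simp add: to_fract_def)
lemma to_fract_mult: "to_fract (a * b) = to_fract a * to_fract b" by (simp add: to_fract_def)
lemma to_fract_diff: "to_fract (a - b) = to_fract a - to_fract b" by (simp add: to_fract_def)
lemma to_fract_0: "to_fract 0 = 0" by (simp add: to_fract_def Zero_fract_def)
lemma to_fract_1: "to_fract 1 = 1" by (simp add: to_fract_def One_fract_def)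
lemma to_fract_inj: "to_fract a = to_fract b \<longleftrightarrow> a = b" by (simp add: to_fract_def eq_fract)
lemma to_fract_eq0: "to_fract a = 0 \<longleftrightarrow> a = 0" using to_fract_inj[of a 0] to_fract_0 by metis
lemma inj_to_fract: "inj to_fract" by (simp add: inj_def to_fract_inj)

lemma fract_repr: obtains a b where "b \<noteq> 0" "x = to_fract a / to_fract b"
proof (cases x)
  case (Fract a b)
  then have "x = to_fract a / to_fract b" by (simp add: to_fract_def)
  then show ?thesis using that Fract by blast
qed

lemma to_fract_subring: "is_subring R \<Longrightarrow> is_subring (to_fract ` R)"
  unfolding is_subring_def
  by (auto simp: to_fract_0[symmetric] to_fract_1[symmetric] to_fract_add[symmetric]
      to_fract_diff[symmetric] to_fract_mult[symmetric])

lemma to_fract_submod: "is_submod R M \<Longrightarrow> is_submod (to_fract ` R) (to_fract ` M)"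
  unfolding is_submod_def
  by (auto simp: to_fract_0[symmetric] to_fract_add[symmetric] to_fract_mult[symmetric])

lemma to_fract_prime:
  assumes R: "is_subring R" and P: "prime_ideal R P"
  shows "prime_ideal (to_fract ` R) (to_fract ` P)"
  unfolding prime_ideal_def
proof (intro conjI)
  have PI: "is_ideal R P" using prime_ideal_ideal[OF P] .
  show "is_ideal (to_fract ` R) (to_fract ` P)"
    unfolding is_ideal_def using to_fract_submod[OF ideal_submod[OF PI]] ideal_sub[OF PI] by blast
  show "to_fract ` P \<noteq> to_fract ` R" using prime_ideal_ne[OF P] inj_image_eq_iff[OF inj_to_fract] by blast
  show "\<forall>a\<in>to_fract ` R. \<forall>b\<in>to_fract ` R. a * b \<in> to_fract ` P \<longrightarrow> a \<in> to_fract ` P \<or> b \<in> to_fract ` P"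
  proof (intro ballI impI)
    fix a b assume "a \<in> to_fract ` R" "b \<in> to_fract ` R" "a * b \<in> to_fract ` P"
    then obtain x y z where "x \<in> R" "y \<in> R" "z \<in> P" "a = to_fract x" "b = to_fract y" "to_fract x * to_fract y = to_fract z"
      by blast
    then have "x * y \<in> P" "a = to_fract x" "b = to_fract y" "x \<in> R" "y \<in> R"
      by (auto simp: to_fract_mult[symmetric] to_fract_inj)
    then show "a \<in> to_fract ` P \<or> b \<in> to_fract ` P" using prime_ideal_mult[OF P] by blast
  qed
qed


lemma embY_add: "embY (a + b) = embY a + embY b"
  by (simp add: embY_def to_fract_add[symmetric])
lemma embY_mult: "embY (a * b) = embY a * embY b"
proof -
  have "[:a * b:] = [:a:] * [:b:]" by simp
  then show ?thesis unfolding embY_def by (simp only: to_fract_mult)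
qed
lemma embY_0: "embY 0 = 0" by (simp add: embY_def to_fract_0)
lemma embY_1: "embY 1 = 1" unfolding embY_def one_pCons[symmetric] by (rule to_fract_1)
lemma embY_inj: "embY a = embY b \<longleftrightarrow> a = b" by (simp add: embY_def to_fract_inj)
lemma embY_nz: "a \<noteq> 0 \<Longrightarrow> embY a \<noteq> 0" using embY_inj embY_0 by metis
lemma embY_div: "b \<noteq> 0 \<Longrightarrow> embY (a / b) = embY a / embY b"
proof -
  assume b: "b \<noteq> 0"
  have "embY a = embY (a / b) * embY b" using embY_mult[of "a / b" b] b by simp
  then show ?thesis using embY_nz[OF b] by (simp add: field_simps)
qed

lemma to_fract_sum: "to_fract (sum f I) = (\<Sum>i\<in>I. to_fract (f i))"
  by (induction I rule: infinite_finite_induct) (auto simp: to_fract_0 to_fract_add)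

locale dom =
  fixes D :: "'k::field set"
  assumes sub: "is_subring D" and qf: "quot_field_of D"
begin

lemma A1_Rpoly: "A1 D = to_fract ` Rpoly D" by (simp add: A1_def DX_Rpoly)

lemma DX_subring: "is_subring (DX D)" using Rpoly_subring[OF sub] by (simp add: DX_Rpoly)

lemma A1_subring: "is_subring (A1 D)" using to_fract_subring[OF DX_subring] by (simp add: A1_def)

lemma A1_0: "0 \<in> A1 D" using subring_0[OF A1_subring] .
lemma A1_1: "1 \<in> A1 D" using subring_1[OF A1_subring] .

lemma clear_denom: "\<exists>d\<in>D. d \<noteq> 0 \<and> smult d p \<in> Rpoly D"
proof -
  obtain d where d: "d \<in> D" "d \<noteq> 0" "\<forall>s\<in>coeff p ` {..degree p}. d * s \<in> D"
    using fin_denom[of "coeff p ` {..degree p}" D] sub qf by blast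
  have "smult d p \<in> Rpoly D"
  proof (rule RpolyI)
    fix i show "coeff (smult d p) i \<in> D"
    proof (cases "i \<le> degree p")
      case True then show ?thesis using d(3) by simp
    next
      case False then show ?thesis using subring_0[OF sub] by (simp add: coeff_eq_0)
    qed
  qed
  then show ?thesis using d by blast
qed

lemma A1_qf: "quot_field_of (A1 D)"
  unfolding quot_field_of_def
proof
  fix x :: "'k poly fract"
  obtain a b where ab: "b \<noteq> 0" "x = to_fract a / to_fract b" using fract_repr by blast
  obtain d1 where d1: "d1 \<in> D" "d1 \<noteq> 0" "smult d1 a \<in> Rpoly D" using clear_denom by blast
  obtain d2 where d2: "d2 \<in> D" "d2 \<noteq> 0" "smult d2 b \<in> Rpoly D" using clear_denom by blast
  let ?a = "smult d2 (smult d1 a)" and ?b = "smult d1 (smult d2 b)"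
  have "?a \<in> Rpoly D"
    using Rpoly_mult_submod(1)[OF subring_submod[OF sub] d1(3) Rpoly_const[OF d2(1) subring_0[OF sub]]]
    by (simp add: mult.commute[of d2 d1])
  moreover have "?b \<in> Rpoly D"
    using Rpoly_mult_submod(1)[OF subring_submod[OF sub] d2(3) Rpoly_const[OF d1(1) subring_0[OF sub]]]
    by (simp add: mult.commute[of d2 d1])
  moreover have "?b \<noteq> 0" using ab d1 d2 by simp
  moreover have "x = to_fract ?a / to_fract ?b"
  proof -
    have "?a = [:d1 * d2:] * a" by (simp add: mult.commute[of d2 d1])
    moreover have "?b = [:d1 * d2:] * b" by simp
    ultimately have e: "to_fract ?a = to_fract [:d1 * d2:] * to_fract a" "to_fract ?b = to_fract [:d1 * d2:] * to_fract b"
      by (simp_all only: to_fract_mult)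
    have "[:d1 * d2:] \<noteq> 0" using d1(2) d2(2) by simp
    then have "to_fract [:d1 * d2:] \<noteq> 0" using to_fract_eq0 by blast
    then have "to_fract ?a / to_fract ?b = to_fract a / to_fract b"
      unfolding e by (rule mult_divide_mult_cancel_left)
    then show ?thesis using ab(2) by simp
  qed
  ultimately have "to_fract ?a \<in> A1 D" "to_fract ?b \<in> A1 D" "to_fract ?b \<noteq> 0" "x = to_fract ?a / to_fract ?b"
    unfolding A1_Rpoly using to_fract_eq0 by blast+
  then show "\<exists>a\<in>A1 D. \<exists>b\<in>A1 D. b \<noteq> 0 \<and> x = a / b" by blast
qed

lemma polyY_DX: "polyY (DX D) = Rpoly (A1 D)" by (simp add: polyY_Rpoly A1_def)

lemma polyY_subring: "is_subring (polyY (DX D))"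
  using Rpoly_subring[OF A1_subring] polyY_DX by simp

lemma Delta_prime: "Q \<in> Delta1 D st \<Longrightarrow> prime_ideal (DX D) Q" by (simp add: Delta1_def)

lemma polyY_prime: "Q \<in> Delta1 D st \<Longrightarrow> prime_ideal (polyY (DX D)) (polyY Q)"
  unfolding polyY_Rpoly
  using Rpoly_prime[OF to_fract_subring[OF DX_subring] to_fract_prime[OF DX_subring Delta_prime]] .

lemma zero_Delta: "{0} \<in> Delta1 D st"
proof -
  have "(1::'k poly) \<notin> {0}" by simp
  then have ne: "{0} \<noteq> DX D" using subring_1[OF DX_subring] by blast
  have "prime_ideal (DX D) {0}" unfolding prime_ideal_def is_ideal_def is_submod_def
    using subring_0[OF DX_subring] ne by auto
  moreover have "contr D {0} = {0}" using subring_0[OF sub] by (auto simp: contr_def)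
  ultimately show ?thesis by (simp add: Delta1_def)
qed

lemma S1_sub: "S1 D st \<subseteq> Rpoly (A1 D)" by (auto simp: S1_def polyY_DX)

lemma S1_1: "1 \<in> S1 D st"
proof -
  have "1 \<in> polyY (DX D)" using subring_1[OF polyY_subring] .
  moreover have "1 \<notin> polyY Q" if "Q \<in> Delta1 D st" for Q
    using ideal_one[OF prime_ideal_ideal[OF polyY_prime[OF that]]] prime_ideal_ne[OF polyY_prime[OF that]] by blast
  ultimately show ?thesis unfolding S1_def by blast
qed

lemma S1_0: "0 \<notin> S1 D st"
proof -
  have "0 \<in> polyY {0}" by (simp add: polyY_def to_fract_0)
  then show ?thesis unfolding S1_def using zero_Delta by blast
qed

lemma S1_mult: "s \<in> S1 D st \<Longrightarrow> t \<in> S1 D st \<Longrightarrow> s * t \<in> S1 D st"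
proof -
  assume s: "s \<in> S1 D st" and t: "t \<in> S1 D st"
  have sY: "s \<in> polyY (DX D)" "t \<in> polyY (DX D)" using s t by (auto simp: S1_def)
  have "s * t \<in> polyY (DX D)" using subring_mult[OF polyY_subring sY] .
  moreover have "s * t \<notin> polyY Q" if Q: "Q \<in> Delta1 D st" for Q
  proof
    assume "s * t \<in> polyY Q"
    then have "s \<in> polyY Q \<or> t \<in> polyY Q" using prime_ideal_mult[OF polyY_prime[OF Q] sY] by blast
    then show False using s t Q unfolding S1_def by blast
  qed
  ultimately show ?thesis unfolding S1_def by blast
qed

lemma locS1_eq: "locS1 D st = {a / t | a t. a \<in> to_fract ` Rpoly (A1 D) \<and> t \<in> to_fract ` S1 D st}"
  unfolding locS1_def polyY_DX by blast

lemma const_Rpoly: "is_submod (A1 D) E \<Longrightarrow> e \<in> E \<Longrightarrow> [:e:] \<in> Rpoly E"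
  using Rpoly_const submod_0 by blast

lemma bracket_char:
  assumes E: "is_submod (A1 D) E"
  shows "u \<in> bracket D st E \<longleftrightarrow> (\<exists>s\<in>S1 D st. [:u:] * s \<in> Rpoly E)"
proof
  assume "u \<in> bracket D st E"
  then have u: "embY u \<in> gen_mod (locS1 D st) (embY ` E)" by (simp add: bracket_def)
  have G: "gen_mod {a / t | a t. a \<in> to_fract ` Rpoly (A1 D) \<and> t \<in> to_fract ` S1 D st} (embY ` E)
     \<subseteq> {n / t | n t. n \<in> to_fract ` Rpoly E \<and> t \<in> to_fract ` S1 D st}"
  proof (rule gen_frac)
    show "is_subring (to_fract ` Rpoly (A1 D))" using to_fract_subring[OF Rpoly_subring[OF A1_subring]] .
    show "to_fract ` S1 D st \<subseteq> to_fract ` Rpoly (A1 D)" using S1_sub by blast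
    show "1 \<in> to_fract ` S1 D st" unfolding to_fract_1[symmetric] by (rule imageI[OF S1_1])
    show "0 \<notin> to_fract ` S1 D st"
    proof
      assume "0 \<in> to_fract ` S1 D st"
      then obtain s where "0 = to_fract s" "s \<in> S1 D st" by (rule imageE)
      then show False using S1_0 to_fract_eq0 by metis
    qed
    show "s * t \<in> to_fract ` S1 D st" if st: "s \<in> to_fract ` S1 D st" "t \<in> to_fract ` S1 D st" for s t
    proof -
      obtain a b where "a \<in> S1 D st" "b \<in> S1 D st" "s = to_fract a" "t = to_fract b" using st by blast
      then have "s * t = to_fract (a * b)" "a * b \<in> S1 D st" using S1_mult by (simp_all add: to_fract_mult)
      then show ?thesis by blast
    qed
    show "is_submod (to_fract ` Rpoly (A1 D)) (to_fract ` Rpoly E)"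
      using to_fract_submod[OF Rpoly_submod[OF E]] .
    show "embY ` E \<subseteq> to_fract ` Rpoly E" unfolding embY_def using const_Rpoly[OF E] by blast
  qed
  have "embY u \<in> {n / t | n t. n \<in> to_fract ` Rpoly E \<and> t \<in> to_fract ` S1 D st}"
    using subsetD[OF G u[unfolded locS1_eq]] .
  then obtain h s where hs: "h \<in> Rpoly E" "s \<in> S1 D st" "embY u = to_fract h / to_fract s" by blast
  have "to_fract s \<noteq> 0" using hs(2) S1_0 to_fract_eq0 by metis
  then have "to_fract [:u:] * to_fract s = to_fract h" using hs(3) unfolding embY_def by (simp add: field_simps)
  then have "to_fract ([:u:] * s) = to_fract h" by (simp only: to_fract_mult)
  then have "[:u:] * s = h" using to_fract_inj by blast
  then show "\<exists>s\<in>S1 D st. [:u:] * s \<in> Rpoly E" using hs by blast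
next
  assume "\<exists>s\<in>S1 D st. [:u:] * s \<in> Rpoly E"
  then obtain s where s: "s \<in> S1 D st" "[:u:] * s \<in> Rpoly E" by blast
  define h where "h = [:u:] * s"
  have s0: "to_fract s \<noteq> 0" using s(1) S1_0 to_fract_eq0 by metis
  have "to_fract h = to_fract [:u:] * to_fract s" unfolding h_def by (simp only: to_fract_mult)
  then have "embY u = to_fract h / to_fract s" using s0 unfolding embY_def by simp
  also have "\<dots> = to_fract (\<Sum>i\<le>degree h. monom (coeff h i) i) / to_fract s"
    by (simp add: poly_as_sum_of_monoms)
  also have "\<dots> = (\<Sum>i\<le>degree h. (to_fract (monom 1 i) / to_fract s) * embY (coeff h i))"
  proof -
    have "\<And>i. to_fract (monom (coeff h i) i) = to_fract (monom 1 i) * embY (coeff h i)"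
    proof -
      fix i
      have "monom (coeff h i) i = monom 1 i * [:coeff h i:]" by (simp add: smult_monom)
      then show "to_fract (monom (coeff h i) i) = to_fract (monom 1 i) * embY (coeff h i)"
        unfolding embY_def by (simp only: to_fract_mult)
    qed
    then show ?thesis by (simp add: to_fract_sum sum_divide_distrib)
  qed
  also have "\<dots> \<in> gen_mod (locS1 D st) (embY ` E)"
  proof (rule gen_mod_sum)
    fix i
    have "monom 1 i \<in> Rpoly (A1 D)" using Rpoly_monom A1_0 A1_1 by blast
    then have m: "to_fract (monom 1 i) \<in> to_fract ` Rpoly (A1 D)" by (rule imageI)
    have t: "to_fract s \<in> to_fract ` S1 D st" using s(1) by (rule imageI)
    have "to_fract (monom 1 i) / to_fract s \<in> {a / t | a t. a \<in> to_fract ` Rpoly (A1 D) \<and> t \<in> to_fract ` S1 D st}"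
      using m t by blast
    then have L: "to_fract (monom 1 i) / to_fract s \<in> locS1 D st" unfolding locS1_eq .
    have "coeff h i \<in> E" unfolding h_def by (rule RpolyD[OF s(2)])
    then have "embY (coeff h i) \<in> gen_mod (locS1 D st) (embY ` E)" using gen_mod_sub by blast
    then show "to_fract (monom 1 i) / to_fract s * embY (coeff h i) \<in> gen_mod (locS1 D st) (embY ` E)"
      by (rule gen_mod_mult[OF L])
  qed simp
  finally show "u \<in> bracket D st E" by (simp add: bracket_def)
qed

lemma embY_A1: "r \<in> A1 D \<Longrightarrow> embY r \<in> locS1 D st"
proof -
  assume r: "r \<in> A1 D"
  have "[:r:] \<in> Rpoly (A1 D)" using Rpoly_const[OF r A1_0] .
  moreover have "embY r = to_fract [:r:] / to_fract 1" by (simp add: embY_def to_fract_1)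
  ultimately show ?thesis unfolding locS1_eq using S1_1 by blast
qed

lemma br_ext: "E \<subseteq> bracket D st E"
  unfolding bracket_def using gen_mod_sub by blast

lemma br_mono: "E \<subseteq> F \<Longrightarrow> bracket D st E \<subseteq> bracket D st F"
  unfolding bracket_def using gen_mod_mono[of "embY ` E" "embY ` F"] by blast

lemma br_idem: "bracket D st (bracket D st E) = bracket D st E"
proof
  show "bracket D st E \<subseteq> bracket D st (bracket D st E)" using br_ext .
  have "embY ` bracket D st E \<subseteq> gen_mod (locS1 D st) (embY ` E)" unfolding bracket_def by blast
  then have "gen_mod (locS1 D st) (embY ` bracket D st E) \<subseteq> gen_mod (locS1 D st) (embY ` E)"
    using gen_mod_mono gen_mod_idem by metis
  then show "bracket D st (bracket D st E) \<subseteq> bracket D st E"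
    unfolding bracket_def[of D st "bracket D st E"] by (auto simp: bracket_def)
qed

lemma br_submod: "is_submod (A1 D) (bracket D st E)"
  unfolding is_submod_def
proof (intro conjI ballI)
  show "0 \<in> bracket D st E" by (simp add: bracket_def embY_0 gen_mod_0)
  fix x y assume "x \<in> bracket D st E" "y \<in> bracket D st E"
  then show "x + y \<in> bracket D st E" by (simp add: bracket_def embY_add gen_mod_add)
next
  fix r x assume "r \<in> A1 D" "x \<in> bracket D st E"
  then show "r * x \<in> bracket D st E"
    using gen_mod_mult[OF embY_A1] by (simp add: bracket_def embY_mult)
qed

lemma br_Fbar: "E \<in> Fbar (A1 D) \<Longrightarrow> bracket D st E \<in> Fbar (A1 D)"
  using br_submod br_ext Fbar_ne FbarI by (metis subsetD)

lemma br_homog: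
  assumes x: "x \<noteq> 0"
  shows "bracket D st ((*) x ` E) = (*) x ` bracket D st E"
proof -
  have ex: "embY x \<noteq> 0" using embY_nz[OF x] .
  have im: "embY ` ((*) x ` E) = (*) (embY x) ` (embY ` E)" by (auto simp: embY_mult image_image)
  have G: "gen_mod (locS1 D st) (embY ` ((*) x ` E)) = (*) (embY x) ` gen_mod (locS1 D st) (embY ` E)"
    using gen_mod_scale[OF ex] im by simp
  show ?thesis
  proof
    show "bracket D st ((*) x ` E) \<subseteq> (*) x ` bracket D st E"
    proof
      fix u assume "u \<in> bracket D st ((*) x ` E)"
      then obtain w where w: "w \<in> gen_mod (locS1 D st) (embY ` E)" "embY u = embY x * w"
        using G by (auto simp: bracket_def)
      have "embY (u / x) = embY u / embY x" using embY_div[OF x] .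
      also have "\<dots> = w" using w(2) ex by simp
      finally have "w = embY (u / x)" by simp
      then have "u / x \<in> bracket D st E" using w(1) by (simp add: bracket_def)
      moreover have "u = x * (u / x)" using x by simp
      ultimately show "u \<in> (*) x ` bracket D st E" by blast
    qed
    show "(*) x ` bracket D st E \<subseteq> bracket D st ((*) x ` E)"
    proof
      fix u assume "u \<in> (*) x ` bracket D st E"
      then obtain v where v: "v \<in> bracket D st E" "u = x * v" by blast
      have "embY u = embY x * embY v" using v by (simp add: embY_mult)
      then show "u \<in> bracket D st ((*) x ` E)" using v G by (auto simp: bracket_def)
    qed
  qed
qed

lemma br_semistar: "semistar (A1 D) (bracket D st)"
  unfolding semistar_def
proof (intro conjI allI ballI impI)
  fix E :: "'k poly fract set" assume "E \<in> Fbar (A1 D)" then show "bracket D st E \<in> Fbar (A1 D)" using br_Fbar by blast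
next
  fix x :: "'k poly fract" and E :: "'k poly fract set" assume "x \<noteq> 0" "E \<in> Fbar (A1 D)"
  then show "bracket D st ((*) x ` E) = (*) x ` bracket D st E" using br_homog by blast
next
  fix E F :: "'k poly fract set" assume "E \<subseteq> F" then show "bracket D st E \<subseteq> bracket D st F" using br_mono by blast
next
  fix E :: "'k poly fract set" show "E \<subseteq> bracket D st E" using br_ext .
next
  fix E :: "'k poly fract set" show "bracket D st (bracket D st E) = bracket D st E" using br_idem .
qed

lemma br_stable: "stable (A1 D) (bracket D st)"
  unfolding stable_def
proof (intro ballI)
  fix E F assume E: "E \<in> Fbar (A1 D)" and F: "F \<in> Fbar (A1 D)"
  have EM: "is_submod (A1 D) E" and FM: "is_submod (A1 D) F" using E F Fbar_submod by blast+
  have EF: "is_submod (A1 D) (E \<inter> F)" using submod_Int[OF EM FM] .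
  show "bracket D st (E \<inter> F) = bracket D st E \<inter> bracket D st F"
  proof
    show "bracket D st (E \<inter> F) \<subseteq> bracket D st E \<inter> bracket D st F" using br_mono by blast
    show "bracket D st E \<inter> bracket D st F \<subseteq> bracket D st (E \<inter> F)"
    proof
      fix u assume "u \<in> bracket D st E \<inter> bracket D st F"
      then obtain s t where st: "s \<in> S1 D st" "[:u:] * s \<in> Rpoly E" "t \<in> S1 D st" "[:u:] * t \<in> Rpoly F"
        using bracket_char[OF EM] bracket_char[OF FM] by blast
      have e1: "[:u:] * (s * t) = ([:u:] * s) * t" by (simp only: mult.assoc)
      have e2: "[:u:] * (s * t) = ([:u:] * t) * s" by (metis mult.assoc mult.commute)
      have "([:u:] * s) * t \<in> Rpoly E" using Rpoly_mult_submod(2)[OF EM st(2)] S1_sub st(3) by blast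
      moreover have "([:u:] * t) * s \<in> Rpoly F" using Rpoly_mult_submod(2)[OF FM st(4)] S1_sub st(1) by blast
      ultimately have "[:u:] * (s * t) \<in> Rpoly E" "[:u:] * (s * t) \<in> Rpoly F" using e1 e2 by simp_all
      then have "[:u:] * (s * t) \<in> Rpoly (E \<inter> F)" using Rpoly_Int by blast
      then show "u \<in> bracket D st (E \<inter> F)" using bracket_char[OF EF] S1_mult[OF st(1) st(3)] by blast
    qed
  qed
qed

lemma br_finite_type: "finite_type (A1 D) (bracket D st)"
  unfolding finite_type_def
proof
  fix E assume E: "E \<in> Fbar (A1 D)"
  have EM: "is_submod (A1 D) E" using Fbar_submod[OF E] .
  show "bracket D st E = star_f (A1 D) (bracket D st) E"
  proof
    show "star_f (A1 D) (bracket D st) E \<subseteq> bracket D st E"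
      unfolding star_f_def using br_mono by blast
    show "bracket D st E \<subseteq> star_f (A1 D) (bracket D st) E"
    proof
      fix u assume "u \<in> bracket D st E"
      then obtain s where s: "s \<in> S1 D st" "[:u:] * s \<in> Rpoly E" using bracket_char[OF EM] by blast
      define h where "h = [:u:] * s"
      obtain e where e: "e \<in> E" "e \<noteq> 0" using Fbar_ne[OF E] by blast
      define T where "T = insert e (coeff h ` {..degree h})"
      have Tfin: "finite T" by (simp add: T_def)
      have hE: "\<And>i. coeff h i \<in> E" unfolding h_def by (rule RpolyD[OF s(2)])
      have TE: "T \<subseteq> E" unfolding T_def using e(1) hE by blast
      have "e \<in> gen_mod (A1 D) T" using gen_mod_sub[of T "A1 D"] unfolding T_def by blast
      then have "gen_mod (A1 D) T \<noteq> {0}" using e(2) by blast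
      then have fg: "fg_frac (A1 D) (gen_mod (A1 D) T)" using fg_gen[OF Tfin A1_subring A1_qf] by blast
      have FE: "gen_mod (A1 D) T \<subseteq> E" using gen_mod_subset_submod[OF EM TE] .
      have "h \<in> Rpoly (gen_mod (A1 D) T)"
      proof (rule RpolyI)
        fix i show "coeff h i \<in> gen_mod (A1 D) T"
        proof (cases "i \<le> degree h")
          case True then have "coeff h i \<in> T" unfolding T_def by simp
          then show ?thesis using gen_mod_sub[of T "A1 D"] by (rule rev_subsetD)
        next
          case False then show ?thesis by (simp add: coeff_eq_0 gen_mod_0)
        qed
      qed
      then have "\<exists>s\<in>S1 D st. [:u:] * s \<in> Rpoly (gen_mod (A1 D) T)" using s(1) unfolding h_def by blast
      then have "u \<in> bracket D st (gen_mod (A1 D) T)"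
        using bracket_char[OF gen_mod_submod] by blast
      then show "u \<in> star_f (A1 D) (bracket D st) E" using sf_memI[OF fg FE] by blast
    qed
  qed
qed

lemma br_sstar: "sstar (A1 D) (bracket D st)"
  using A1_subring A1_qf br_semistar by (simp add: sstar_def)

lemma br_tilde: "eq_on_Fbar (A1 D) (tilde (A1 D) (bracket D st)) (bracket D st)"
  using sstar.stable_tilde_eq[OF br_sstar br_stable br_finite_type] .

end


section \<open>McCoy-type lemma\<close>

lemma mccoy:
  fixes p g :: "'a::field poly"
  assumes R: "is_subring R" and g: "g \<in> Rpoly R" and pg: "p * g \<in> Rpoly R"
    and gk: "coeff g k \<noteq> 0" "inverse (coeff g k) \<in> R"
  shows "p \<in> Rpoly R"
proof -
  have claim: "\<forall>c\<in>R. (\<forall>i\<ge>n. c * coeff p i \<in> R) \<longrightarrow> (\<forall>i. c * coeff p i \<in> R)" for n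
  proof (induction n)
    case 0 then show ?case by simp
  next
    case (Suc n)
    show ?case
    proof (intro ballI impI)
      fix c assume c: "c \<in> R" and hi: "\<forall>i\<ge>Suc n. c * coeff p i \<in> R"
      show "\<forall>i. c * coeff p i \<in> R"
      proof (cases "c * coeff p n \<in> R")
        case True
        then have "\<forall>i\<ge>n. c * coeff p i \<in> R" using hi by (metis le_antisym not_less_eq_eq)
        then show ?thesis using Suc.IH c by blast
      next
        case False
        have gR: "\<And>j. coeff g j \<in> R" using g RpolyD by blast
        have good: "\<forall>i. coeff g j * c * coeff p i \<in> R" if "coeff g j * c * coeff p n \<in> R" for j
        proof -
          have gc: "coeff g j * c \<in> R" using subring_mult[OF R gR c] .
          have "\<forall>i\<ge>n. coeff g j * c * coeff p i \<in> R"
          proof (intro allI impI)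
            fix i assume "n \<le> i"
            show "coeff g j * c * coeff p i \<in> R"
            proof (cases "i = n")
              case True then show ?thesis using that by simp
            next
              case False
              then have "c * coeff p i \<in> R" using hi \<open>n \<le> i\<close> by simp
              then have "coeff g j * (c * coeff p i) \<in> R" using subring_mult[OF R gR] by blast
              then show ?thesis by (simp add: mult.assoc)
            qed
          qed
          then show ?thesis using Suc.IH gc by blast
        qed
        define J where "J = {j. coeff g j * c * coeff p n \<notin> R}"
        have Jfin: "finite J"
        proof (rule finite_subset)
          show "J \<subseteq> {..degree g}"
          proof
            fix j assume "j \<in> J"
            then have "coeff g j \<noteq> 0" using subring_0[OF R] unfolding J_def by auto
            then show "j \<in> {..degree g}" using le_degree by auto
          qed
        qed simp
        have "k \<in> J"
        proof (rule ccontr)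
          assume "k \<notin> J"
          then have "\<forall>i. coeff g k * c * coeff p i \<in> R" using good unfolding J_def by blast
          then have "inverse (coeff g k) * (coeff g k * c * coeff p n) \<in> R"
            using subring_mult[OF R gk(2)] by blast
          then have "c * coeff p n \<in> R" using gk(1) by (simp add: field_simps)
          then show False using False by blast
        qed
        then have Jne: "J \<noteq> {}" by blast
        define r where "r = Max J"
        have rJ: "r \<in> J" unfolding r_def using Max_in[OF Jfin Jne] .
        have above: "\<And>j. j > r \<Longrightarrow> j \<notin> J" unfolding r_def using Max_ge[OF Jfin] by fastforce
        let ?t = "\<lambda>a. c * (coeff p a * coeff g (n + r - a))"
        have "c * coeff (p * g) (n + r) \<in> R" using subring_mult[OF R c RpolyD[OF pg]] .
        moreover have "c * coeff (p * g) (n + r) = ?t n + (\<Sum>a\<in>{..n+r} - {n}. ?t a)"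
          by (simp add: coeff_mult sum.remove[of "{..n+r}" n] distrib_left sum_distrib_left)
        moreover have rest: "(\<Sum>a\<in>{..n+r} - {n}. ?t a) \<in> R"
        proof (rule subring_sum[OF _ R])
          show "finite ({..n+r} - {n})" by simp
          fix a assume a: "a \<in> {..n+r} - {n}"
          show "?t a \<in> R"
          proof (cases "a < n")
            case True
            then have "n + r - a > r" by simp
            then have "n + r - a \<notin> J" using above by blast
            then have "coeff g (n + r - a) * c * coeff p n \<in> R" unfolding J_def by blast
            then have "coeff g (n + r - a) * c * coeff p a \<in> R" using good by blast
            then show ?thesis by (simp add: ac_simps)
          next
            case False
            then have "a \<ge> Suc n" using a by auto
            then have "c * coeff p a \<in> R" using hi by blast
            then have "(c * coeff p a) * coeff g (n + r - a) \<in> R" using subring_mult[OF R _ gR] by blast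
            then show ?thesis by (simp add: ac_simps)
          qed
        qed
        ultimately have "?t n \<in> R" using subring_diff[OF R] by (metis add_diff_cancel_right')
        then have "coeff g r * c * coeff p n \<in> R" by (simp add: ac_simps)
        then show ?thesis using rJ unfolding J_def by blast
      qed
    qed
  qed
  have "\<forall>i\<ge>Suc (degree p). 1 * coeff p i \<in> R"
    using subring_0[OF R] by (simp add: coeff_eq_0)
  then have "\<forall>i. 1 * coeff p i \<in> R" using claim subring_1[OF R] by blast
  then show ?thesis by (simp add: Rpoly_def)
qed

lemma loc_subring:
  fixes A :: "'f::field set"
  assumes A: "is_subring A" and P: "prime_ideal A P"
  shows "is_subring (localization A P)"
proof -
  have PI: "is_ideal A P" using prime_ideal_ideal[OF P] .
  have one: "1 \<notin> P" using ideal_one[OF PI] prime_ideal_ne[OF P] by blast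
  have zero: "0 \<in> P" using submod_0[OF ideal_submod[OF PI]] .
  have mulT: "s * t \<in> A \<and> s * t \<notin> P" if "s \<in> A" "s \<notin> P" "t \<in> A" "t \<notin> P" for s t
    using that prime_ideal_mult[OF P] subring_mult[OF A] by blast
  show ?thesis unfolding is_subring_def
  proof (intro conjI ballI)
    show "0 \<in> localization A P" using loc_A[OF A one] subring_0[OF A] by blast
    show "1 \<in> localization A P" using loc_A[OF A one] subring_1[OF A] by blast
    fix x y assume "x \<in> localization A P" "y \<in> localization A P"
    then obtain a s b t where h: "a \<in> A" "s \<in> A" "s \<notin> P" "b \<in> A" "t \<in> A" "t \<notin> P" "x = a / s" "y = b / t"
      unfolding localization_def by blast
    have nz: "s \<noteq> 0" "t \<noteq> 0" using h zero by auto
    have st: "s * t \<in> A" "s * t \<notin> P" using mulT h by blast+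
    have "x + y = (a * t + b * s) / (s * t)" using nz h by (simp add: field_simps)
    moreover have "a * t + b * s \<in> A" using h subring_add[OF A] subring_mult[OF A] by blast
    ultimately show "x + y \<in> localization A P" unfolding localization_def using st by blast
    have "x - y = (a * t - b * s) / (s * t)" using nz h by (simp add: field_simps)
    moreover have "a * t - b * s \<in> A" using h subring_diff[OF A] subring_mult[OF A] by blast
    ultimately show "x - y \<in> localization A P" unfolding localization_def using st by blast
    have "x * y = (a * b) / (s * t)" using nz h by simp
    moreover have "a * b \<in> A" using h subring_mult[OF A] by blast
    ultimately show "x * y \<in> localization A P" unfolding localization_def using st by blast
  qed
qed

lemma bracket_cong: "Delta1 D s1 = Delta1 D s2 \<Longrightarrow> bracket D s1 = bracket D s2"
  unfolding bracket_def[abs_def] locS1_def S1_def by simp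

lemma contr_sub: "contr D Q \<subseteq> D" by (auto simp: contr_def)

lemma Delta_cong:
  assumes "\<And>P. P \<subseteq> D \<Longrightarrow> (star_f D s1 P \<subset> s1 D \<longleftrightarrow> star_f D s2 P \<subset> s2 D)"
  shows "Delta1 D s1 = Delta1 D s2"
  unfolding Delta1_def using assms[OF contr_sub] by simp

context sstar
begin

lemma Delta_tilde: "Delta1 A (tilde A st) = Delta1 A st"
  by (rule Delta_cong) (simp add: cond_tilde cond_st)

lemma Delta_sf: "Delta1 A (star_f A st) = Delta1 A st"
  by (rule Delta_cong) (simp add: cond_sf cond_st)

end



lemma part5:
  fixes D :: "'k::field set" and st :: "'k set \<Rightarrow> 'k set"
  assumes sub: "is_subring D" and qf: "quot_field_of D" and ss: "semistar D st" and eq: "st D = D"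
  shows "bracket D st (A1 D) = A1 D"
proof -
  interpret d: dom D using sub qf by (simp add: dom_def)
  interpret s: sstar D st using sub qf ss by (simp add: sstar_def)
  show ?thesis
  proof
    show "A1 D \<subseteq> bracket D st (A1 D)" by (rule d.br_ext)
    show "bracket D st (A1 D) \<subseteq> A1 D"
    proof
      fix u assume "u \<in> bracket D st (A1 D)"
      then obtain s where s: "s \<in> S1 D st" "[:u:] * s \<in> Rpoly (A1 D)"
        using d.bracket_char[OF subring_submod[OF d.A1_subring]] by blast
      have sY: "s \<in> Rpoly (A1 D)" by (rule subsetD[OF d.S1_sub s(1)])
      have cs: "\<exists>q. q \<in> DX D \<and> coeff s i = to_fract q" for i
      proof -
        have "coeff s i \<in> to_fract ` DX D" using RpolyD[OF sY, of i] unfolding A1_def .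
        then obtain q where "q \<in> DX D" "coeff s i = to_fract q" by (rule imageE) simp
        then show ?thesis by blast
      qed
      have cuA: "\<And>i. u * coeff s i \<in> A1 D"
      proof -
        fix i have "coeff ([:u:] * s) i = u * coeff s i" by simp
        then show "u * coeff s i \<in> A1 D" using RpolyD[OF s(2), of i] by simp
      qed
      define A0 where "A0 = range (to_fract :: 'k poly \<Rightarrow> 'k poly fract)"
      have A0sub: "is_subring A0" unfolding A0_def
        by (rule to_fract_subring) (simp add: is_subring_def)
      have A0qf: "quot_field_of A0" unfolding quot_field_of_def A0_def
      proof
        fix x :: "'k poly fract"
        obtain a b where "b \<noteq> 0" "x = to_fract a / to_fract b" using fract_repr by blast
        then show "\<exists>a\<in>range to_fract. \<exists>b\<in>range to_fract. b \<noteq> 0 \<and> x = a / b" using to_fract_eq0 by blast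
      qed
      have idss: "semistar A0 (\<lambda>E. E)" unfolding semistar_def by simp
      interpret z: sstar A0 "\<lambda>E. E" using A0sub A0qf idss by (simp add: sstar_def)
      define I where "I = {x \<in> A0. x * u \<in> A0}"
      have A1A0: "A1 D \<subseteq> A0" unfolding A1_def A0_def by blast
      have Iid: "is_ideal A0 I" unfolding is_ideal_def is_submod_def I_def
      proof (intro conjI ballI)
        show "{x \<in> A0. x * u \<in> A0} \<subseteq> A0" by blast
        show "0 \<in> {x \<in> A0. x * u \<in> A0}" using subring_0[OF A0sub] by simp
        fix x y assume "x \<in> {x \<in> A0. x * u \<in> A0}" "y \<in> {x \<in> A0. x * u \<in> A0}"
        then show "x + y \<in> {x \<in> A0. x * u \<in> A0}"
          using subring_add[OF A0sub, of x y] subring_add[OF A0sub, of "x * u" "y * u"] by (simp add: distrib_right)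
      next
        fix r x assume "r \<in> A0" "x \<in> {x \<in> A0. x * u \<in> A0}"
        then show "r * x \<in> {x \<in> A0. x * u \<in> A0}"
          using subring_mult[OF A0sub, of r x] subring_mult[OF A0sub, of r "x * u"] by (simp add: mult.assoc)
      qed
      have Ine: "I \<noteq> {0}"
      proof -
        obtain a b where ab: "b \<noteq> 0" "u = to_fract a / to_fract b" using fract_repr by blast
        have tb: "to_fract b \<noteq> 0" using ab(1) to_fract_eq0 by blast
        have "to_fract b * u = to_fract a" using ab tb by simp
        then have "to_fract b \<in> I" unfolding I_def A0_def by simp
        then show ?thesis using tb by blast
      qed
      have "1 \<in> I"
      proof (rule ccontr)
        assume n1: "1 \<notin> I"
        have "star_f A0 (\<lambda>E. E) I \<subseteq> I" unfolding star_f_def by blast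
        then have "1 \<notin> star_f A0 (\<lambda>E. E) I" using n1 by blast
        then obtain P where P: "P \<in> QMax A0 (star_f A0 (\<lambda>E. E))" "I \<subseteq> P" using z.zorn_qmax[OF Iid Ine] by blast
        have Pp: "prime_ideal A0 P" using z.qmax_prime[OF P(1)] .
        have PI: "is_ideal A0 P" using prime_ideal_ideal[OF Pp] .
        have PM: "is_submod A0 P" using ideal_submod[OF PI] .
        have P1: "1 \<notin> P" using ideal_one[OF PI] prime_ideal_ne[OF Pp] by blast
        define Q where "Q = {q \<in> DX D. to_fract q \<in> P}"
        have DXs: "is_subring (DX D)" using d.DX_subring .
        have tA0: "\<And>q. to_fract q \<in> A0" unfolding A0_def by blast
        have "prime_ideal (DX D) Q"
          unfolding prime_ideal_def is_ideal_def is_submod_def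
        proof (intro conjI ballI impI)
          show "Q \<subseteq> DX D" unfolding Q_def by blast
          show "0 \<in> Q" unfolding Q_def using subring_0[OF DXs] submod_0[OF PM] by (simp add: to_fract_0)
          show "Q \<noteq> DX D"
          proof
            assume "Q = DX D"
            then have "1 \<in> Q" using subring_1[OF DXs] by simp
            then show False using P1 unfolding Q_def by (simp add: to_fract_1)
          qed
        next
          fix x y assume "x \<in> Q" "y \<in> Q"
          then show "x + y \<in> Q" unfolding Q_def using subring_add[OF DXs] submod_add[OF PM]
            by (simp add: to_fract_add)
        next
          fix r x assume "r \<in> DX D" "x \<in> Q"
          then show "r * x \<in> Q" unfolding Q_def using subring_mult[OF DXs] submod_mult[OF PM tA0]
            by (simp add: to_fract_mult)
        next
          fix a b assume "a \<in> DX D" "b \<in> DX D" "a * b \<in> Q"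
          then show "a \<in> Q \<or> b \<in> Q" unfolding Q_def using prime_ideal_mult[OF Pp tA0 tA0]
            by (simp add: to_fract_mult)
        qed
        moreover have "contr D Q = {0}"
        proof
          show "contr D Q \<subseteq> {0}"
          proof
            fix x assume "x \<in> contr D Q"
            then have xP: "to_fract [:x:] \<in> P" unfolding contr_def Q_def by simp
            show "x \<in> {0}"
            proof (rule ccontr)
              assume "x \<notin> {0}"
              then have x0: "x \<noteq> 0" by simp
              have "to_fract [:inverse x:] * to_fract [:x:] \<in> P" using submod_mult[OF PM tA0 xP] .
              moreover have "[:inverse x:] * [:x:] = 1" using x0 by simp
              ultimately have "1 \<in> P" by (simp only: to_fract_mult[symmetric] to_fract_1)
              then show False using P1 by blast
            qed
          qed
          show "{0} \<subseteq> contr D Q"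
            unfolding contr_def Q_def using subring_0[OF sub] subring_0[OF DXs] submod_0[OF PM]
            by (simp add: to_fract_0)
        qed
        ultimately have QD: "Q \<in> Delta1 D st" unfolding Delta1_def by simp
        have "s \<in> polyY Q"
          unfolding polyY_def
        proof (intro CollectI allI)
          fix i
          obtain q where q: "q \<in> DX D" "coeff s i = to_fract q" using cs by blast
          have "u * coeff s i \<in> A0" using cuA[of i] A1A0 by blast
          then have "to_fract q \<in> I" unfolding I_def using q(2) tA0 by (simp add: mult.commute)
          then have "q \<in> Q" unfolding Q_def using q(1) P(2) by blast
          then show "coeff s i \<in> to_fract ` Q" using q(2) by blast
        qed
        then show False using s(1) QD unfolding S1_def by blast
      qed
      then have "u \<in> A0" unfolding I_def by simp
      then obtain p where p: "u = to_fract p" unfolding A0_def by blast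
      have loc: "p \<in> Rpoly (localization D M)" if M: "M \<in> QMax D (star_f D st)" for M
      proof -
        have Mp: "prime_ideal D M" using s.qmax_prime[OF M] .
        have MI: "is_ideal D M" using prime_ideal_ideal[OF Mp] .
        have MD: "M \<subseteq> D" using ideal_sub[OF MI] .
        have M0: "0 \<in> M" using submod_0[OF ideal_submod[OF MI]] .
        have M1: "1 \<notin> M" using ideal_one[OF MI] prime_ideal_ne[OF Mp] by blast
        have "contr D (DX M) = M"
        proof
          show "contr D (DX M) \<subseteq> M"
          proof
            fix x assume "x \<in> contr D (DX M)"
            then have "[:x:] \<in> Rpoly M" unfolding contr_def DX_Rpoly by simp
            then show "x \<in> M" using RpolyD[of "[:x:]" M 0] by simp
          qed
          show "M \<subseteq> contr D (DX M)"
          proof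
            fix x assume x: "x \<in> M"
            then have "[:x:] \<in> Rpoly M" using Rpoly_const M0 by blast
            then show "x \<in> contr D (DX M)" unfolding contr_def DX_Rpoly using x MD by blast
          qed
        qed
        moreover have "prime_ideal (DX D) (DX M)"
          unfolding DX_Rpoly using Rpoly_prime[OF sub Mp] .
        moreover have "star_f D st M \<subset> st D" using s.cond_st[OF MD] s.qmax_one[OF M] by blast
        ultimately have "DX M \<in> Delta1 D st" unfolding Delta1_def by simp
        then have "s \<notin> polyY (DX M)" using s(1) unfolding S1_def by blast
        then obtain i where i: "coeff s i \<notin> to_fract ` DX M" unfolding polyY_def by blast
        obtain q where q: "q \<in> DX D" "coeff s i = to_fract q" using cs by blast
        have "q \<notin> DX M" using i q(2) by blast
        then obtain k where k: "coeff q k \<notin> M" unfolding DX_def by blast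
        have qk: "coeff q k \<in> D" using q(1) unfolding DX_def by blast
        obtain r where r: "r \<in> DX D" "u * coeff s i = to_fract r" using cuA[of i] unfolding A1_def by blast
        have "to_fract (p * q) = to_fract r" using r(2) q(2) p by (simp only: to_fract_mult)
        then have pq: "p * q \<in> DX D" using r(1) to_fract_inj by metis
        let ?R = "localization D M"
        have RS: "is_subring ?R" using loc_subring[OF sub Mp] .
        have DR: "D \<subseteq> ?R" using loc_A[OF sub M1] .
        have qR: "q \<in> Rpoly ?R" using q(1) DR unfolding DX_Rpoly Rpoly_def by blast
        have pqR: "p * q \<in> Rpoly ?R" using pq DR unfolding DX_Rpoly Rpoly_def by blast
        have qk0: "coeff q k \<noteq> 0" using k M0 by (metis)
        have "inverse (coeff q k) = 1 / coeff q k" by (simp add: field_simps)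
        then have "inverse (coeff q k) \<in> ?R" unfolding localization_def using qk k subring_1[OF sub] by blast
        then show ?thesis using mccoy[OF RS qR pqR qk0] by blast
      qed
      have "p \<in> DX D" unfolding DX_def
      proof (intro CollectI allI)
        fix j
        have "coeff p j \<in> tilde D st D" unfolding tilde_mem
        proof
          fix M assume M: "M \<in> QMax D (star_f D st)"
          have "coeff p j \<in> localization D M" using RpolyD[OF loc[OF M]] .
          moreover have "1 \<in> gen_mod (localization D M) D" using gen_mod_sub subring_1[OF sub] by blast
          ultimately have "coeff p j * 1 \<in> gen_mod (localization D M) D" using gen_mod_mult by blast
          then show "coeff p j \<in> gen_mod (localization D M) D" by simp
        qed
        then have "coeff p j \<in> star_f D st D" using s.tilde_le_sf[OF subring_Fbar[OF sub]] by blast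
        then have "coeff p j \<in> st D" using s.sf_le[OF subring_Fbar[OF sub]] by blast
        then show "coeff p j \<in> D" using eq by simp
      qed
      then show "u \<in> A1 D" unfolding A1_def using p by blast
    qed
  qed
qed

theorem theorem2p3:
  fixes D :: "'k::field set" and st :: "'k set \<Rightarrow> 'k set"
  assumes "is_subring D" and "quot_field_of D" and "semistar D st"
  shows "semistar (A1 D) (bracket D st) \<and> stable (A1 D) (bracket D st)
       \<and> finite_type (A1 D) (bracket D st)
       \<and> eq_on_Fbar (A1 D) (tilde (A1 D) (bracket D st)) (bracket D st)
       \<and> (st D = D \<longrightarrow> bracket D st (A1 D) = A1 D)
       \<and> eq_on_Fbar (A1 D) (bracket D (tilde D st)) (bracket D st)
       \<and> eq_on_Fbar (A1 D) (bracket D (star_f D st)) (bracket D st)"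
proof -
  interpret d: dom D using assms by (simp add: dom_def)
  interpret s: sstar D st using assms by (simp add: sstar_def)
  have b1: "bracket D (tilde D st) = bracket D st" using bracket_cong[OF s.Delta_tilde] .
  have b2: "bracket D (star_f D st) = bracket D st" using bracket_cong[OF s.Delta_sf] .
  show ?thesis
    using d.br_semistar d.br_stable d.br_finite_type d.br_tilde part5[OF assms] b1 b2
    by (simp add: eq_on_Fbar_def)
qed


end
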